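(* Let $G$ be a connected $\{K_4,K_{2,3},F_1,F_2\}$-induced-minor-free graph. Then $G$ has at most one hole.
   Context: A hole is an induced cycle of length at least $4$. $H$ is an induced minor of $G$ if $H$ can be obtained from $G$ by vertex deletions and edge contractions; $\mathcal F$-induced-minor-free means no member of $\mathcal F$ is an induced minor. $F_1$ is the graph consisting of two $4$-cycles sharing exactly one edge ($C_6$ plus a chord joining two antipodal vertices); $F_2$ is the graph consisting of two $4$-cycles sharing exactly one vertex. *)

theory Defs
  imports Main
begin

definition graph :: "'a set \<Rightarrow> 'a set set \<Rightarrow> bool" where
  "graph V E \<longleftrightarrow> finite V \<and> (\<forall>e\<in>E. e \<subseteq> V \<and> card e = 2)"

definition induced_edges :: "'a set set \<Rightarrow> 'a set \<Rightarrow> 'a set set" where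
  "induced_edges E S = {e\<in>E. e \<subseteq> S}"

definition connected_graph :: "'a set \<Rightarrow> 'a set set \<Rightarrow> bool" where
  "connected_graph V E \<longleftrightarrow> V \<noteq> {} \<and>
     (\<forall>u\<in>V. \<forall>v\<in>V. (u, v) \<in> {(x, y). {x, y} \<in> E \<and> x \<in> V \<and> y \<in> V}\<^sup>*)"

definition degree :: "'a set set \<Rightarrow> 'a \<Rightarrow> nat" where
  "degree E v = card {u. {u, v} \<in> E}"

definition cycle_graph :: "'a set \<Rightarrow> 'a set set \<Rightarrow> bool" where
  "cycle_graph V E \<longleftrightarrow> card V \<ge> 3 \<and> connected_graph V E \<and> (\<forall>v\<in>V. degree E v = 2)"

definition hole :: "'a set \<Rightarrow> 'a set set \<Rightarrow> 'a set \<Rightarrow> bool" where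
  "hole V E C \<longleftrightarrow> C \<subseteq> V \<and> card C \<ge> 4 \<and> cycle_graph C (induced_edges E C)"

text \<open>H = (VH, EH) is an induced minor of G = (V, E): there is a model by pairwise disjoint,
  nonempty, connected branch sets, with branch sets adjacent exactly for edges of H
  (equivalent to obtainability by vertex deletions and edge contractions).\<close>
definition induced_minor :: "'b set \<Rightarrow> 'b set set \<Rightarrow> 'a set \<Rightarrow> 'a set set \<Rightarrow> bool" where
  "induced_minor VH EH V E \<longleftrightarrow> (\<exists>f :: 'b \<Rightarrow> 'a set.
     (\<forall>h\<in>VH. f h \<noteq> {} \<and> f h \<subseteq> V \<and> connected_graph (f h) (induced_edges E (f h))) \<and>
     (\<forall>h\<in>VH. \<forall>h'\<in>VH. h \<noteq> h' \<longrightarrow> f h \<inter> f h' = {}) \<and>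
     (\<forall>h\<in>VH. \<forall>h'\<in>VH. h \<noteq> h' \<longrightarrow>
        ({h, h'} \<in> EH \<longleftrightarrow> (\<exists>x\<in>f h. \<exists>y\<in>f h'. {x, y} \<in> E))))"

definition K4_V :: "nat set" where "K4_V = {0,1,2,3}"
definition K4_E :: "nat set set" where "K4_E = {{x,y} | x y. x \<in> K4_V \<and> y \<in> K4_V \<and> x \<noteq> y}"

definition K23_V :: "nat set" where "K23_V = {0,1,2,3,4}"
definition K23_E :: "nat set set" where "K23_E = {{x,y} | x y. x \<in> {0,1} \<and> y \<in> {2,3,4}}"

text \<open>F1: C6 on 0..5 plus the chord 0--3 (two 4-cycles sharing the edge 0--3).\<close>
definition F1_V :: "nat set" where "F1_V = {0,1,2,3,4,5}"
definition F1_E :: "nat set set" where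
  "F1_E = {{0,1},{1,2},{2,3},{3,4},{4,5},{5,0},{0,3}}"

text \<open>F2: two 4-cycles 0-1-2-3-0 and 0-4-5-6-0 sharing exactly the vertex 0.\<close>
definition F2_V :: "nat set" where "F2_V = {0,1,2,3,4,5,6}"
definition F2_E :: "nat set set" where
  "F2_E = {{0,1},{1,2},{2,3},{3,0},{0,4},{4,5},{5,6},{6,0}}"

end

theory Submission
  imports Defs
begin

locale G =
  fixes V :: "'a set" and E :: "'a set set"
  assumes graph: "graph V E"
begin

definition adj :: "'a \<Rightarrow> 'a \<Rightarrow> bool" where "adj x y \<longleftrightarrow> {x,y} \<in> E"

lemma adj_sym: "adj x y = adj y x"
  unfolding adj_def by (simp add: insert_commute)

lemma adj_irrefl[simp]: "\<not> adj x x"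
  using graph unfolding adj_def graph_def by fastforce

lemma adj_V: "adj x y \<Longrightarrow> x \<in> V \<and> y \<in> V"
  using graph unfolding adj_def graph_def by blast

lemma adj_neq: "adj x y \<Longrightarrow> x \<noteq> y" by auto

definition rel :: "'a set \<Rightarrow> ('a \<times> 'a) set" where
  "rel S = {(x,y). adj x y \<and> x \<in> S \<and> y \<in> S}"

definition conn :: "'a set \<Rightarrow> bool" where
  "conn S \<longleftrightarrow> connected_graph S (induced_edges E S)"

lemma conn_iff: "conn S \<longleftrightarrow> S \<noteq> {} \<and> (\<forall>u\<in>S. \<forall>v\<in>S. (u,v) \<in> (rel S)\<^sup>*)"
proof -
  have "{(x, y). {x, y} \<in> induced_edges E S \<and> x \<in> S \<and> y \<in> S} = rel S"
    unfolding rel_def induced_edges_def adj_def by auto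
  then show ?thesis unfolding conn_def connected_graph_def by simp
qed

definition adjS :: "'a set \<Rightarrow> 'a set \<Rightarrow> bool" where
  "adjS A B \<longleftrightarrow> (\<exists>x\<in>A. \<exists>y\<in>B. adj x y)"

lemma adjS_sym: "adjS A B = adjS B A"
  unfolding adjS_def using adj_sym by blast

lemma rel_sym: "(x,y) \<in> rel S \<Longrightarrow> (y,x) \<in> rel S"
  unfolding rel_def using adj_sym by auto

lemma rtrancl_rel_sym: "(x,y) \<in> (rel S)\<^sup>* \<Longrightarrow> (y,x) \<in> (rel S)\<^sup>*"
proof (induction rule: rtrancl_induct)
  case base then show ?case by simp
next
  case (step y z)
  then have "(z,y) \<in> rel S" by (simp add: rel_sym)
  then show ?case using step.IH by (rule converse_rtrancl_into_rtrancl)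
qed

lemma rel_mono: "S \<subseteq> T \<Longrightarrow> rel S \<subseteq> rel T"
  unfolding rel_def by auto

lemma rtrancl_rel_mono: "S \<subseteq> T \<Longrightarrow> (x,y) \<in> (rel S)\<^sup>* \<Longrightarrow> (x,y) \<in> (rel T)\<^sup>*"
  using rel_mono[of S T] rtrancl_mono[of "rel S" "rel T"] by (auto simp del: )

lemma conn_single: "conn {x}"
  unfolding conn_iff by simp

lemma conn_union:
  assumes "conn A" "conn B" "adjS A B"
  shows "conn (A \<union> B)"
proof -
  obtain a b where ab: "a \<in> A" "b \<in> B" "adj a b" using assms(3) unfolding adjS_def by blast
  let ?R = "(rel (A \<union> B))\<^sup>*"
  have rab: "(a,b) \<in> ?R" using ab unfolding rel_def by auto
  have rba: "(b,a) \<in> ?R" using rab by (rule rtrancl_rel_sym)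
  have cA: "\<forall>u\<in>A. \<forall>v\<in>A. (u,v) \<in> (rel A)\<^sup>*" using assms(1) unfolding conn_iff by blast
  have cB: "\<forall>u\<in>B. \<forall>v\<in>B. (u,v) \<in> (rel B)\<^sup>*" using assms(2) unfolding conn_iff by blast
  have rA: "(u,v) \<in> ?R" if "u \<in> A" "v \<in> A" for u v
    by (rule rtrancl_rel_mono[of A]) (use cA that in auto)
  have rB: "(u,v) \<in> ?R" if "u \<in> B" "v \<in> B" for u v
    by (rule rtrancl_rel_mono[of B]) (use cB that in auto)
  have "(u,v) \<in> ?R" if "u \<in> A \<union> B" "v \<in> A \<union> B" for u v
  proof (cases "u \<in> A")
    case True
    show ?thesis
    proof (cases "v \<in> A")
      case True with \<open>u \<in> A\<close> show ?thesis using rA by blast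
    next
      case False
      then have "v \<in> B" using that by blast
      have "(u,a) \<in> ?R" using rA \<open>u \<in> A\<close> ab(1) by blast
      moreover have "(b,v) \<in> ?R" using rB \<open>v \<in> B\<close> ab(2) by blast
      ultimately show ?thesis using rab by (meson rtrancl_trans)
    qed
  next
    case False
    then have "u \<in> B" using that by blast
    show ?thesis
    proof (cases "v \<in> B")
      case True with \<open>u \<in> B\<close> show ?thesis using rB by blast
    next
      case False
      then have "v \<in> A" using that by blast
      have "(u,b) \<in> ?R" using rB \<open>u \<in> B\<close> ab(2) by blast
      moreover have "(a,v) \<in> ?R" using rA \<open>v \<in> A\<close> ab(1) by blast
      ultimately show ?thesis using rba by (meson rtrancl_trans)
    qed
  qed
  then show ?thesis unfolding conn_iff using ab by blast
qed

lemma conn_pair: "adj x y \<Longrightarrow> conn {x,y}"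
  using conn_union[of "{x}" "{y}"] conn_single unfolding adjS_def by (simp add: insert_commute)

lemma cut_edge:
  assumes "connected_graph W F" "T \<subseteq> W" "t \<in> T" "v \<in> W" "v \<notin> T"
  shows "\<exists>x\<in>T. \<exists>y\<in>W - T. {x,y} \<in> F"
proof -
  have "(t,v) \<in> {(x, y). {x, y} \<in> F \<and> x \<in> W \<and> y \<in> W}\<^sup>*"
    using assms unfolding connected_graph_def by blast
  then have "v \<in> T \<or> (\<exists>x\<in>T. \<exists>y\<in>W - T. {x,y} \<in> F)"
  proof (induction rule: rtrancl_induct)
    case base then show ?case using assms by simp
  next
    case (step y z) then show ?case by blast
  qed
  then show ?thesis using assms by blast
qed

end

context G begin

definition ipath :: "'a list \<Rightarrow> bool" where
  "ipath p \<longleftrightarrow> distinct p \<and> (\<forall>i<length p. \<forall>j<length p. adj (p!i) (p!j) \<longleftrightarrow> (i = Suc j \<or> j = Suc i))"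

definition seg :: "'a list \<Rightarrow> nat \<Rightarrow> nat \<Rightarrow> 'a set" where
  "seg p i j = {p!k | k. i \<le> k \<and> k < j}"

lemma ipath_adj: "ipath p \<Longrightarrow> i < length p \<Longrightarrow> j < length p \<Longrightarrow> adj (p!i) (p!j) \<longleftrightarrow> (i = Suc j \<or> j = Suc i)"
  unfolding ipath_def by blast

lemma ipath_distinct: "ipath p \<Longrightarrow> distinct p"
  unfolding ipath_def by blast

lemma ipath_eq: "ipath p \<Longrightarrow> i < length p \<Longrightarrow> j < length p \<Longrightarrow> p!i = p!j \<longleftrightarrow> i = j"
  using ipath_distinct nth_eq_iff_index_eq by blast

lemma seg_Suc: "seg p i (Suc j) = (if i \<le> j then insert (p!j) (seg p i j) else seg p i j)"
  unfolding seg_def by (auto simp: less_Suc_eq)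

lemma seg_single: "seg p i (Suc i) = {p!i}"
  unfolding seg_def using le_less_Suc_eq by fastforce

lemma seg_conn:
  assumes "ipath p" "i < j" "j \<le> length p"
  shows "conn (seg p i j)"
  using assms(2,3)
proof (induction j)
  case 0 then show ?case by simp
next
  case (Suc j)
  show ?case
  proof (cases "i = j")
    case True then show ?thesis using seg_single conn_single by simp
  next
    case False
    then have ij: "i < j" using Suc by simp
    have c: "conn (seg p i j)" using Suc ij by simp
    have a: "adj (p!(j - 1)) (p!j)" using ipath_adj[OF assms(1), of "j-1" j] ij Suc by simp
    have "p!(j-1) \<in> seg p i j" unfolding seg_def using ij by (intro CollectI exI[of _ "j-1"]) auto
    then have "adjS (seg p i j) {p!j}" unfolding adjS_def using a by blast
    then have "conn (seg p i j \<union> {p!j})" using conn_union[OF c conn_single] by blast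
    then show ?thesis using seg_Suc[of p i j] ij by simp
  qed
qed

lemma seg_mem: "x \<in> seg p i j \<longleftrightarrow> (\<exists>k. i \<le> k \<and> k < j \<and> x = p!k)"
  unfolding seg_def by blast

lemma seg_ne: "i < j \<Longrightarrow> seg p i j \<noteq> {}"
  unfolding seg_def by auto

lemma seg_sub: "j \<le> length p \<Longrightarrow> seg p i j \<subseteq> set p"
  unfolding seg_def by auto

lemma ipath_rev: "ipath p \<Longrightarrow> ipath (rev p)"
proof -
  assume a: "ipath p"
  show ?thesis unfolding ipath_def
  proof (intro conjI allI impI)
    show "distinct (rev p)" using a ipath_distinct by simp
    fix i j assume ij: "i < length (rev p)" "j < length (rev p)"
    have "adj (rev p ! i) (rev p ! j) = adj (p ! (length p - Suc i)) (p ! (length p - Suc j))"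
      using ij by (simp add: rev_nth)
    also have "\<dots> = (length p - Suc i = Suc (length p - Suc j) \<or> length p - Suc j = Suc (length p - Suc i))"
      using ij ipath_adj[OF a] by simp
    also have "\<dots> = (i = Suc j \<or> j = Suc i)" using ij by auto
    finally show "adj (rev p ! i) (rev p ! j) = (i = Suc j \<or> j = Suc i)" .
  qed
qed

lemma ipath_drop: "ipath p \<Longrightarrow> ipath (drop n p)"
proof -
  assume a: "ipath p"
  show ?thesis unfolding ipath_def
  proof (intro conjI allI impI)
    show "distinct (drop n p)" using a ipath_distinct by simp
    fix i j assume ij: "i < length (drop n p)" "j < length (drop n p)"
    then show "adj (drop n p ! i) (drop n p ! j) = (i = Suc j \<or> j = Suc i)"
      using ipath_adj[OF a, of "n+i" "n+j"] by auto
  qed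
qed

lemma ipath_take: "ipath p \<Longrightarrow> ipath (take n p)"
proof -
  assume a: "ipath p"
  show ?thesis unfolding ipath_def
  proof (intro conjI allI impI)
    show "distinct (take n p)" using a ipath_distinct by simp
    fix i j assume ij: "i < length (take n p)" "j < length (take n p)"
    then show "adj (take n p ! i) (take n p ! j) = (i = Suc j \<or> j = Suc i)"
      using ipath_adj[OF a, of i j] by auto
  qed
qed

end

context G begin

lemma hole_basic: "hole V E C \<Longrightarrow> finite C \<and> C \<subseteq> V \<and> card C \<ge> 4"
  using graph unfolding hole_def graph_def using finite_subset by blast

lemma hole_conn: "hole V E C \<Longrightarrow> conn C"
  unfolding hole_def cycle_graph_def conn_def by blast

lemma hole_deg: assumes "hole V E C" "x \<in> C" shows "card {u\<in>C. adj u x} = 2"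
proof -
  have "degree (induced_edges E C) x = 2" using assms unfolding hole_def cycle_graph_def by blast
  moreover have "{u. {u, x} \<in> induced_edges E C} = {u\<in>C. adj u x}"
    using assms(2) unfolding induced_edges_def adj_def by auto
  ultimately show ?thesis unfolding degree_def by simp
qed

lemma two_nbrs:
  assumes "hole V E C" "x \<in> C" "a \<in> C" "b \<in> C" "a \<noteq> b" "adj a x" "adj b x"
  shows "{u\<in>C. adj u x} = {a,b}"
proof -
  have f: "finite {u\<in>C. adj u x}" using hole_basic[OF assms(1)] by simp
  have "{a,b} \<subseteq> {u\<in>C. adj u x}" using assms by auto
  moreover have "card {a,b} = card {u\<in>C. adj u x}" using hole_deg[OF assms(1,2)] assms(5) by simp
  ultimately show ?thesis using card_subset_eq[OF f] by blast
qed

lemma three_nbrs: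
  assumes "hole V E C" "x \<in> C" "a \<in> C" "b \<in> C" "c \<in> C" "a \<noteq> b" "a \<noteq> c" "b \<noteq> c"
    "adj a x" "adj b x" "adj c x"
  shows False
proof -
  have "c \<in> {u\<in>C. adj u x}" using assms by simp
  then show False using two_nbrs[OF assms(1,2,3,4,6,9,10)] assms(7,8) by simp
qed

lemma hole_cycle:
  assumes H: "hole V E C" and vC: "v \<in> C"
  shows "\<exists>xs. distinct xs \<and> set xs = C \<and> xs!0 = v \<and> length xs = card C \<and>
    (\<forall>i<length xs. \<forall>j<length xs. adj (xs!i) (xs!j) \<longleftrightarrow>
        (j = Suc i \<or> i = Suc j \<or> (i = 0 \<and> j = length xs - 1) \<or> (j = 0 \<and> i = length xs - 1)))"
proof -
  define cp where "cp xs \<longleftrightarrow> distinct xs \<and> set xs \<subseteq> C \<and> xs \<noteq> [] \<and> xs!0 = v \<and>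
     (\<forall>i. Suc i < length xs \<longrightarrow> adj (xs!i) (xs!Suc i))" for xs
  define P where "P n \<longleftrightarrow> (\<exists>xs. cp xs \<and> length xs = n)" for n
  have fC: "finite C" and c4: "card C \<ge> 4" using hole_basic[OF H] by auto
  have "P 1" unfolding P_def cp_def using vC by (intro exI[of _ "[v]"]) auto
  moreover have "\<forall>y. P y \<longrightarrow> y \<le> card C"
  proof (intro allI impI)
    fix y assume "P y"
    then obtain xs where "cp xs" "length xs = y" unfolding P_def by blast
    then have "distinct xs" "set xs \<subseteq> C" unfolding cp_def by auto
    then have "card (set xs) \<le> card C" "card (set xs) = length xs" using card_mono[OF fC] distinct_card by auto
    then show "y \<le> card C" using \<open>length xs = y\<close> by simp
  qed
  ultimately obtain n where Pn: "P n" and nmax: "\<forall>y. P y \<longrightarrow> y \<le> n"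
    using Nat.ex_has_greatest_nat[of P 1 "card C"] by blast
  obtain xs where cxs: "cp xs" and ln: "length xs = n" using Pn unfolding P_def by blast
  have dxs: "distinct xs" and sxs: "set xs \<subseteq> C" and x0: "xs!0 = v" and n1: "n \<ge> 1"
    and cons: "\<And>i. Suc i < n \<Longrightarrow> adj (xs!i) (xs!Suc i)"
    using cxs ln unfolding cp_def by (auto simp: Suc_le_eq)
  have inC: "\<And>i. i < n \<Longrightarrow> xs!i \<in> C" using sxs ln by auto
  have eqi: "\<And>i j. i < n \<Longrightarrow> j < n \<Longrightarrow> xs!i = xs!j \<longleftrightarrow> i = j"
    using dxs ln nth_eq_iff_index_eq by blast
  define l where "l = xs!(n-1)"
  have lC: "l \<in> C" unfolding l_def using inC n1 by simp
  have ext: "y \<in> set xs" if "y \<in> C" "adj l y" for y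
  proof (rule ccontr)
    assume ny: "y \<notin> set xs"
    have "cp (xs @ [y])" unfolding cp_def
    proof (intro conjI allI impI)
      show "distinct (xs @ [y])" using dxs ny by simp
      show "set (xs @ [y]) \<subseteq> C" using sxs that by simp
      show "xs @ [y] \<noteq> []" by simp
      show "(xs @ [y]) ! 0 = v" using x0 n1 ln by (simp add: nth_append)
      fix i assume i: "Suc i < length (xs @ [y])"
      show "adj ((xs @ [y]) ! i) ((xs @ [y]) ! Suc i)"
      proof (cases "Suc i < n")
        case True then show ?thesis using cons[OF True] ln by (simp add: nth_append)
      next
        case False
        then have "Suc i = n" using i ln by simp
        then have "i = n - 1" by simp
        then show ?thesis using that(2) ln \<open>Suc i = n\<close> unfolding l_def by (simp add: nth_append)
      qed
    qed
    then have "P (Suc n)" unfolding P_def using ln by (intro exI[of _ "xs @ [y]"]) simp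
    then have "Suc n \<le> n" using nmax by blast
    then show False by simp
  qed
  have "card {u\<in>C. adj u l} = 2" using hole_deg[OF H lC] .
  then obtain y1 y2 where "{u\<in>C. adj u l} = {y1, y2}" "y1 \<noteq> y2"
    by (meson card_2_iff)
  then have y12: "y1 \<noteq> y2" "y1 \<in> C" "y2 \<in> C" "adj y1 l" "adj y2 l" by blast+
  have n2: "n \<ge> 2"
  proof (rule ccontr)
    assume "\<not> n \<ge> 2"
    then have "n = 1" using n1 by simp
    then have "set xs = {v}" using ln x0 by (cases xs) auto
    moreover have "y1 \<in> set xs" using ext[OF y12(2)] y12(4) adj_sym by blast
    moreover have "l = v" unfolding l_def using \<open>n = 1\<close> x0 by simp
    ultimately show False using y12(4) by simp
  qed
  define pl where "pl = xs!(n-2)"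
  have "Suc (n-2) = n - 1" "Suc (n - 2) < n" using n2 by auto
  then have adjpl: "adj pl l" unfolding pl_def l_def using cons[of "n-2"] by simp
  obtain y where y: "y \<in> C" "adj y l" "y \<noteq> pl"
  proof (cases "y1 = pl")
    case True then show ?thesis using that[of y2] y12 by blast
  next
    case False then show ?thesis using that[of y1] y12 by blast
  qed
  have "y \<in> set xs" using ext[OF y(1)] y(2) adj_sym by blast
  then obtain j where j: "j < n" "xs!j = y" using ln by (auto simp: in_set_conv_nth)
  have "j \<noteq> n - 1" using j y(2) unfolding l_def by auto
  moreover have "j \<noteq> n - 2" using j y(3) unfolding pl_def by auto
  ultimately have jn: "j < n - 2" using j(1) by simp
  have j0: "j = 0"
  proof (rule ccontr)
    assume "j \<noteq> 0"
    have a1: "adj (xs!(j-1)) y" using cons[of "j-1"] j jn \<open>j \<noteq> 0\<close> by simp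
    have a2: "adj (xs!(j+1)) y" using cons[of j] j jn adj_sym by simp
    have a3: "adj l y" using y(2) adj_sym by simp
    show False
      apply (rule three_nbrs[OF H _ _ _ _ _ _ _ a1 a2 a3])
      using inC j jn \<open>j \<noteq> 0\<close> lC eqi unfolding l_def by auto
  qed
  have n3: "n \<ge> 3" using jn j0 by simp
  have adjvl: "adj v l" using y(2) j j0 x0 adj_sym by simp
  define pr where "pr i = (if i = 0 then n - 1 else i - 1)" for i
  define sc where "sc i = (if i = n - 1 then 0 else i + 1)" for i
  have prn: "pr i < n" if "i < n" for i using that n3 unfolding pr_def by auto
  have scn: "sc i < n" if "i < n" for i using that n3 unfolding sc_def by auto
  have adjpr: "adj (xs!(pr i)) (xs!i)" if "i < n" for i
  proof (cases "i = 0")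
    case True then show ?thesis unfolding pr_def using adjvl x0 adj_sym unfolding l_def by simp
  next
    case False then show ?thesis unfolding pr_def using cons[of "i-1"] that by simp
  qed
  have adjsc: "adj (xs!(sc i)) (xs!i)" if "i < n" for i
  proof (cases "i = n - 1")
    case True then show ?thesis unfolding sc_def using adjvl x0 unfolding l_def by simp
  next
    case False then show ?thesis unfolding sc_def using cons[of i] that adj_sym by simp
  qed
  have prsc: "pr i \<noteq> sc i" if "i < n" for i using that n3 unfolding pr_def sc_def by auto
  have nbr: "{u\<in>C. adj u (xs!i)} = {xs!(pr i), xs!(sc i)}" if "i < n" for i
    apply (rule two_nbrs[OF H])
    using inC that prn scn prsc eqi adjpr adjsc by auto
  have setC: "set xs = C"
  proof
    show "set xs \<subseteq> C" using sxs .
    show "C \<subseteq> set xs"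
    proof
      fix z assume zC: "z \<in> C"
      have "(v, z) \<in> (rel C)\<^sup>*" using hole_conn[OF H] vC zC unfolding conn_iff by blast
      then show "z \<in> set xs"
      proof (induction rule: rtrancl_induct)
        case base then show ?case using x0 n1 ln nth_mem[of 0 xs] by simp
      next
        case (step a b)
        obtain i where i: "i < n" "xs!i = a" using step(3) ln by (auto simp: in_set_conv_nth)
        have "b \<in> {u\<in>C. adj u (xs!i)}" using step(2) i unfolding rel_def using adj_sym by auto
        then have "b = xs!(pr i) \<or> b = xs!(sc i)" using nbr[OF i(1)] by blast
        then show ?case using prn[OF i(1)] scn[OF i(1)] ln nth_mem by auto
      qed
    qed
  qed
  have adjiff: "adj (xs!i) (xs!j) \<longleftrightarrow>
        (j = Suc i \<or> i = Suc j \<or> (i = 0 \<and> j = n - 1) \<or> (j = 0 \<and> i = n - 1))"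
    if "i < n" "j < n" for i j
  proof -
    have "adj (xs!i) (xs!j) \<longleftrightarrow> xs!j \<in> {u\<in>C. adj u (xs!i)}" using inC that adj_sym by auto
    also have "\<dots> \<longleftrightarrow> xs!j = xs!(pr i) \<or> xs!j = xs!(sc i)" using nbr[OF that(1)] by blast
    also have "\<dots> \<longleftrightarrow> j = pr i \<or> j = sc i" using eqi that prn scn by blast
    also have "\<dots> \<longleftrightarrow> (j = Suc i \<or> i = Suc j \<or> (i = 0 \<and> j = n - 1) \<or> (j = 0 \<and> i = n - 1))"
      unfolding pr_def sc_def using that n3 by auto
    finally show ?thesis .
  qed
  show ?thesis
    apply (rule exI[of _ xs])
    using dxs setC x0 ln adjiff distinct_card[OF dxs] by auto
qed

end

context G begin

lemma hole_path:
  assumes H: "hole V E C" and vC: "v \<in> C"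
  shows "\<exists>p. ipath p \<and> set p = C - {v} \<and> length p + 1 = card C \<and>
     (\<forall>k<length p. adj v (p!k) \<longleftrightarrow> k = 0 \<or> k = length p - 1)"
proof -
  obtain xs where d: "distinct xs" and s: "set xs = C" and x0: "xs!0 = v" and l: "length xs = card C"
    and a: "\<forall>i<length xs. \<forall>j<length xs. adj (xs!i) (xs!j) \<longleftrightarrow>
        (j = Suc i \<or> i = Suc j \<or> (i = 0 \<and> j = length xs - 1) \<or> (j = 0 \<and> i = length xs - 1))"
    using hole_cycle[OF H vC] by blast
  have c4: "card C \<ge> 4" using hole_basic[OF H] by simp
  define p where "p = drop 1 xs"
  have lp: "length p = length xs - 1" unfolding p_def by simp
  have pk: "p!k = xs!(Suc k)" if "k < length p" for k using that unfolding p_def by simp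
  have xs_ne: "xs \<noteq> []" using l c4 by auto
  have xsc: "xs = v # p" unfolding p_def using xs_ne x0 by (cases xs) auto
  have "ipath p" unfolding ipath_def
  proof (intro conjI allI impI)
    show "distinct p" using d xsc by simp
    fix i j assume ij: "i < length p" "j < length p"
    have "adj (p!i) (p!j) = adj (xs!Suc i) (xs!Suc j)" using pk ij by simp
    also have "\<dots> = (Suc j = Suc (Suc i) \<or> Suc i = Suc (Suc j) \<or> (Suc i = 0 \<and> Suc j = length xs - 1) \<or> (Suc j = 0 \<and> Suc i = length xs - 1))"
      using a ij lp by simp
    also have "\<dots> = (i = Suc j \<or> j = Suc i)" by auto
    finally show "adj (p!i) (p!j) = (i = Suc j \<or> j = Suc i)" .
  qed
  moreover have "set p = C - {v}" using xsc s d by auto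
  moreover have "length p + 1 = card C" using lp l xs_ne c4 by simp
  moreover have "\<forall>k<length p. adj v (p!k) \<longleftrightarrow> k = 0 \<or> k = length p - 1"
  proof (intro allI impI)
    fix k assume k: "k < length p"
    have "adj v (p!k) = adj (xs!0) (xs!Suc k)" using pk k x0 by simp
    also have "\<dots> = (Suc k = Suc 0 \<or> 0 = Suc (Suc k) \<or> (Suc k = length xs - 1) \<or> (Suc k = 0 \<and> 0 = length xs - 1))"
      using a k lp xs_ne by simp
    also have "\<dots> = (k = 0 \<or> k = length p - 1)" using lp k by auto
    finally show "adj v (p!k) = (k = 0 \<or> k = length p - 1)" .
  qed
  ultimately show ?thesis by blast
qed

lemma hole_path_start:
  assumes H: "hole V E C" and vC: "v \<in> C" and cC: "c \<in> C" and vc: "adj v c"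
  shows "\<exists>p. ipath p \<and> set p = C - {v} \<and> length p + 1 = card C \<and> p!0 = c \<and>
     (\<forall>k<length p. adj v (p!k) \<longleftrightarrow> k = 0 \<or> k = length p - 1)"
proof -
  obtain p where ip: "ipath p" and sp: "set p = C - {v}" and lp: "length p + 1 = card C"
    and av: "\<forall>k<length p. adj v (p!k) \<longleftrightarrow> k = 0 \<or> k = length p - 1"
    using hole_path[OF H vC] by blast
  have c4: "card C \<ge> 4" using hole_basic[OF H] by simp
  have "c \<noteq> v" using vc adj_neq by blast
  then have "c \<in> set p" using sp cC by simp
  then obtain k where k: "k < length p" "p!k = c" by (auto simp: in_set_conv_nth)
  have "adj v (p!k)" using vc k by simp
  then have k0: "k = 0 \<or> k = length p - 1" using av k(1) by simp
  show ?thesis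
  proof (cases "k = 0")
    case True
    then have "p!0 = c" using k by simp
    show ?thesis by (rule exI[of _ p]) (use ip sp lp av \<open>p!0 = c\<close> in simp)
  next
    case False
    then have kl: "k = length p - 1" using k0 by simp
    define q where "q = rev p"
    have "ipath q" unfolding q_def using ipath_rev[OF ip] .
    moreover have "set q = C - {v}" unfolding q_def using sp by simp
    moreover have "length q + 1 = card C" unfolding q_def using lp by simp
    moreover have "q!0 = c" unfolding q_def using k kl by (subst rev_nth) auto
    moreover have "\<forall>j<length q. adj v (q!j) \<longleftrightarrow> j = 0 \<or> j = length q - 1"
    proof (intro allI impI)
      fix j assume j: "j < length q"
      have "q!j = p!(length p - Suc j)" using j by (simp add: q_def rev_nth)
      moreover have "length p - Suc j < length p" using j by (simp add: q_def)
      ultimately have "adj v (q!j) = (length p - Suc j = 0 \<or> length p - Suc j = length p - 1)"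
        using av by simp
      also have "\<dots> = (j = 0 \<or> j = length q - 1)" using j by (simp add: q_def, linarith)
      finally show "adj v (q!j) = (j = 0 \<or> j = length q - 1)" .
    qed
    ultimately show ?thesis by (intro exI[of _ q]) simp
  qed
qed

end

lemma K4_E_iff: "{i,j} \<in> K4_E \<longleftrightarrow> i \<in> K4_V \<and> j \<in> K4_V \<and> i \<noteq> j"
  unfolding K4_E_def by (auto simp: doubleton_eq_iff)
lemma K23_E_iff: "{i,j} \<in> K23_E \<longleftrightarrow> (i \<in> {0,1} \<and> j \<in> {2,3,4}) \<or> (j \<in> {0,1} \<and> i \<in> {2,3,4})"
  unfolding K23_E_def by (auto simp: doubleton_eq_iff)
context G begin

lemma K4_gen:
  assumes ne: "B0 \<noteq> {}" "B1 \<noteq> {}" "B2 \<noteq> {}" "B3 \<noteq> {}"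
    and sub: "B0 \<subseteq> V" "B1 \<subseteq> V" "B2 \<subseteq> V" "B3 \<subseteq> V"
    and cn: "conn B0" "conn B1" "conn B2" "conn B3"
    and dj: "B0 \<inter> B1 = {}" "B0 \<inter> B2 = {}" "B0 \<inter> B3 = {}" "B1 \<inter> B2 = {}" "B1 \<inter> B3 = {}" "B2 \<inter> B3 = {}"
    and ad: "adjS B0 B1" "adjS B0 B2" "adjS B0 B3" "adjS B1 B2" "adjS B1 B3" "adjS B2 B3"
  shows "induced_minor K4_V K4_E V E"
proof -
  define f where "f i = [B0,B1,B2,B3] ! i" for i :: nat
  have f: "f 0 = B0" "f 1 = B1" "f 2 = B2" "f 3 = B3" unfolding f_def by simp_all
  have ads: "adjS A B \<Longrightarrow> adjS B A" for A B using adjS_sym by blast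
  have djs: "A \<inter> B = {} \<Longrightarrow> B \<inter> A = {}" for A B :: "'a set" by blast
  show ?thesis unfolding induced_minor_def
  proof (intro exI[of _ f] conjI)
    show "\<forall>h\<in>K4_V. f h \<noteq> {} \<and> f h \<subseteq> V \<and> connected_graph (f h) (induced_edges E (f h))"
      unfolding K4_V_def using ne sub cn f unfolding conn_def by simp
    show "\<forall>h\<in>K4_V. \<forall>h'\<in>K4_V. h \<noteq> h' \<longrightarrow> f h \<inter> f h' = {}"
      unfolding K4_V_def using dj djs[OF dj(1)] djs[OF dj(2)] djs[OF dj(3)] djs[OF dj(4)] djs[OF dj(5)] djs[OF dj(6)] f by simp
    show "\<forall>h\<in>K4_V. \<forall>h'\<in>K4_V. h \<noteq> h' \<longrightarrow> ({h, h'} \<in> K4_E) = (\<exists>x\<in>f h. \<exists>y\<in>f h'. {x, y} \<in> E)"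
      using ad ads[OF ad(1)] ads[OF ad(2)] ads[OF ad(3)] ads[OF ad(4)] ads[OF ad(5)] ads[OF ad(6)] f 
      unfolding K4_E_iff unfolding K4_V_def adjS_def[symmetric] adj_def[symmetric]
      by simp
  qed
qed

lemma K23_gen:
  assumes ne: "B0 \<noteq> {}" "B1 \<noteq> {}" "B2 \<noteq> {}" "B3 \<noteq> {}" "B4 \<noteq> {}"
    and sub: "B0 \<subseteq> V" "B1 \<subseteq> V" "B2 \<subseteq> V" "B3 \<subseteq> V" "B4 \<subseteq> V"
    and cn: "conn B0" "conn B1" "conn B2" "conn B3" "conn B4"
    and dj: "B0 \<inter> B1 = {}" "B0 \<inter> B2 = {}" "B0 \<inter> B3 = {}" "B0 \<inter> B4 = {}" "B1 \<inter> B2 = {}" "B1 \<inter> B3 = {}" "B1 \<inter> B4 = {}" "B2 \<inter> B3 = {}" "B2 \<inter> B4 = {}" "B3 \<inter> B4 = {}"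
    and ad: "adjS B0 B2" "adjS B0 B3" "adjS B0 B4" "adjS B1 B2" "adjS B1 B3" "adjS B1 B4"
    and na: "\<not> adjS B0 B1" "\<not> adjS B2 B3" "\<not> adjS B2 B4" "\<not> adjS B3 B4"
  shows "induced_minor K23_V K23_E V E"
proof -
  define f where "f i = [B0,B1,B2,B3,B4] ! i" for i :: nat
  have f: "f 0 = B0" "f 1 = B1" "f 2 = B2" "f 3 = B3" "f 4 = B4" unfolding f_def by simp_all
  have ads: "adjS A B \<Longrightarrow> adjS B A" for A B using adjS_sym by blast
  have djs: "A \<inter> B = {} \<Longrightarrow> B \<inter> A = {}" for A B :: "'a set" by blast
  show ?thesis unfolding induced_minor_def
  proof (intro exI[of _ f] conjI)
    show "\<forall>h\<in>K23_V. f h \<noteq> {} \<and> f h \<subseteq> V \<and> connected_graph (f h) (induced_edges E (f h))"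
      unfolding K23_V_def using ne sub cn f unfolding conn_def by simp
    show "\<forall>h\<in>K23_V. \<forall>h'\<in>K23_V. h \<noteq> h' \<longrightarrow> f h \<inter> f h' = {}"
      unfolding K23_V_def using dj djs[OF dj(1)] djs[OF dj(2)] djs[OF dj(3)] djs[OF dj(4)] djs[OF dj(5)] djs[OF dj(6)] djs[OF dj(7)] djs[OF dj(8)] djs[OF dj(9)] djs[OF dj(10)] f by simp
    show "\<forall>h\<in>K23_V. \<forall>h'\<in>K23_V. h \<noteq> h' \<longrightarrow> ({h, h'} \<in> K23_E) = (\<exists>x\<in>f h. \<exists>y\<in>f h'. {x, y} \<in> E)"
      using ad na ads[OF ad(1)] ads[OF ad(2)] ads[OF ad(3)] ads[OF ad(4)] ads[OF ad(5)] ads[OF ad(6)] f adjS_sym[of B1 B0] adjS_sym[of B3 B2] adjS_sym[of B4 B2] adjS_sym[of B4 B3]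
      unfolding K23_E_iff unfolding K23_V_def adjS_def[symmetric] adj_def[symmetric]
      by simp
  qed
qed

lemma F1_gen:
  assumes ne: "B0 \<noteq> {}" "B1 \<noteq> {}" "B2 \<noteq> {}" "B3 \<noteq> {}" "B4 \<noteq> {}" "B5 \<noteq> {}"
    and sub: "B0 \<subseteq> V" "B1 \<subseteq> V" "B2 \<subseteq> V" "B3 \<subseteq> V" "B4 \<subseteq> V" "B5 \<subseteq> V"
    and cn: "conn B0" "conn B1" "conn B2" "conn B3" "conn B4" "conn B5"
    and dj: "B0 \<inter> B1 = {}" "B0 \<inter> B2 = {}" "B0 \<inter> B3 = {}" "B0 \<inter> B4 = {}" "B0 \<inter> B5 = {}" "B1 \<inter> B2 = {}" "B1 \<inter> B3 = {}" "B1 \<inter> B4 = {}" "B1 \<inter> B5 = {}" "B2 \<inter> B3 = {}" "B2 \<inter> B4 = {}" "B2 \<inter> B5 = {}" "B3 \<inter> B4 = {}" "B3 \<inter> B5 = {}" "B4 \<inter> B5 = {}"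
    and ad: "adjS B0 B1" "adjS B0 B3" "adjS B0 B5" "adjS B1 B2" "adjS B2 B3" "adjS B3 B4" "adjS B4 B5"
    and na: "\<not> adjS B0 B2" "\<not> adjS B0 B4" "\<not> adjS B1 B3" "\<not> adjS B1 B4" "\<not> adjS B1 B5" "\<not> adjS B2 B4" "\<not> adjS B2 B5" "\<not> adjS B3 B5"
  shows "induced_minor F1_V F1_E V E"
proof -
  define f where "f i = [B0,B1,B2,B3,B4,B5] ! i" for i :: nat
  have f: "f 0 = B0" "f 1 = B1" "f 2 = B2" "f 3 = B3" "f 4 = B4" "f 5 = B5" unfolding f_def by simp_all
  have ads: "adjS A B \<Longrightarrow> adjS B A" for A B using adjS_sym by blast
  have djs: "A \<inter> B = {} \<Longrightarrow> B \<inter> A = {}" for A B :: "'a set" by blast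
  show ?thesis unfolding induced_minor_def
  proof (intro exI[of _ f] conjI)
    show "\<forall>h\<in>F1_V. f h \<noteq> {} \<and> f h \<subseteq> V \<and> connected_graph (f h) (induced_edges E (f h))"
      unfolding F1_V_def using ne sub cn f unfolding conn_def by simp
    show "\<forall>h\<in>F1_V. \<forall>h'\<in>F1_V. h \<noteq> h' \<longrightarrow> f h \<inter> f h' = {}"
      unfolding F1_V_def using dj djs[OF dj(1)] djs[OF dj(2)] djs[OF dj(3)] djs[OF dj(4)] djs[OF dj(5)] djs[OF dj(6)] djs[OF dj(7)] djs[OF dj(8)] djs[OF dj(9)] djs[OF dj(10)] djs[OF dj(11)] djs[OF dj(12)] djs[OF dj(13)] djs[OF dj(14)] djs[OF dj(15)] f by simp
    show "\<forall>h\<in>F1_V. \<forall>h'\<in>F1_V. h \<noteq> h' \<longrightarrow> ({h, h'} \<in> F1_E) = (\<exists>x\<in>f h. \<exists>y\<in>f h'. {x, y} \<in> E)"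
      using ad na ads[OF ad(1)] ads[OF ad(2)] ads[OF ad(3)] ads[OF ad(4)] ads[OF ad(5)] ads[OF ad(6)] ads[OF ad(7)] f adjS_sym[of B2 B0] adjS_sym[of B4 B0] adjS_sym[of B3 B1] adjS_sym[of B4 B1] adjS_sym[of B5 B1] adjS_sym[of B4 B2] adjS_sym[of B5 B2] adjS_sym[of B5 B3]
      unfolding F1_V_def F1_E_def adjS_def[symmetric] adj_def[symmetric]
      by (simp add: doubleton_eq_iff)
  qed
qed

lemma F2_gen:
  assumes ne: "B0 \<noteq> {}" "B1 \<noteq> {}" "B2 \<noteq> {}" "B3 \<noteq> {}" "B4 \<noteq> {}" "B5 \<noteq> {}" "B6 \<noteq> {}"
    and sub: "B0 \<subseteq> V" "B1 \<subseteq> V" "B2 \<subseteq> V" "B3 \<subseteq> V" "B4 \<subseteq> V" "B5 \<subseteq> V" "B6 \<subseteq> V"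
    and cn: "conn B0" "conn B1" "conn B2" "conn B3" "conn B4" "conn B5" "conn B6"
    and dj: "B0 \<inter> B1 = {}" "B0 \<inter> B2 = {}" "B0 \<inter> B3 = {}" "B0 \<inter> B4 = {}" "B0 \<inter> B5 = {}" "B0 \<inter> B6 = {}" "B1 \<inter> B2 = {}" "B1 \<inter> B3 = {}" "B1 \<inter> B4 = {}" "B1 \<inter> B5 = {}" "B1 \<inter> B6 = {}" "B2 \<inter> B3 = {}" "B2 \<inter> B4 = {}" "B2 \<inter> B5 = {}" "B2 \<inter> B6 = {}" "B3 \<inter> B4 = {}" "B3 \<inter> B5 = {}" "B3 \<inter> B6 = {}" "B4 \<inter> B5 = {}" "B4 \<inter> B6 = {}" "B5 \<inter> B6 = {}"
    and ad: "adjS B0 B1" "adjS B0 B3" "adjS B0 B4" "adjS B0 B6" "adjS B1 B2" "adjS B2 B3" "adjS B4 B5" "adjS B5 B6"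
    and na: "\<not> adjS B0 B2" "\<not> adjS B0 B5" "\<not> adjS B1 B3" "\<not> adjS B1 B4" "\<not> adjS B1 B5" "\<not> adjS B1 B6" "\<not> adjS B2 B4" "\<not> adjS B2 B5" "\<not> adjS B2 B6" "\<not> adjS B3 B4" "\<not> adjS B3 B5" "\<not> adjS B3 B6" "\<not> adjS B4 B6"
  shows "induced_minor F2_V F2_E V E"
proof -
  define f where "f i = [B0,B1,B2,B3,B4,B5,B6] ! i" for i :: nat
  have f: "f 0 = B0" "f 1 = B1" "f 2 = B2" "f 3 = B3" "f 4 = B4" "f 5 = B5" "f 6 = B6" unfolding f_def by simp_all
  have ads: "adjS A B \<Longrightarrow> adjS B A" for A B using adjS_sym by blast
  have djs: "A \<inter> B = {} \<Longrightarrow> B \<inter> A = {}" for A B :: "'a set" by blast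
  show ?thesis unfolding induced_minor_def
  proof (intro exI[of _ f] conjI)
    show "\<forall>h\<in>F2_V. f h \<noteq> {} \<and> f h \<subseteq> V \<and> connected_graph (f h) (induced_edges E (f h))"
      unfolding F2_V_def using ne sub cn f unfolding conn_def by simp
    show "\<forall>h\<in>F2_V. \<forall>h'\<in>F2_V. h \<noteq> h' \<longrightarrow> f h \<inter> f h' = {}"
      unfolding F2_V_def using dj djs[OF dj(1)] djs[OF dj(2)] djs[OF dj(3)] djs[OF dj(4)] djs[OF dj(5)] djs[OF dj(6)] djs[OF dj(7)] djs[OF dj(8)] djs[OF dj(9)] djs[OF dj(10)] djs[OF dj(11)] djs[OF dj(12)] djs[OF dj(13)] djs[OF dj(14)] djs[OF dj(15)] djs[OF dj(16)] djs[OF dj(17)] djs[OF dj(18)] djs[OF dj(19)] djs[OF dj(20)] djs[OF dj(21)] f by simp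
    show "\<forall>h\<in>F2_V. \<forall>h'\<in>F2_V. h \<noteq> h' \<longrightarrow> ({h, h'} \<in> F2_E) = (\<exists>x\<in>f h. \<exists>y\<in>f h'. {x, y} \<in> E)"
      using ad na ads[OF ad(1)] ads[OF ad(2)] ads[OF ad(3)] ads[OF ad(4)] ads[OF ad(5)] ads[OF ad(6)] ads[OF ad(7)] ads[OF ad(8)] f adjS_sym[of B2 B0] adjS_sym[of B5 B0] adjS_sym[of B3 B1] adjS_sym[of B4 B1] adjS_sym[of B5 B1] adjS_sym[of B6 B1] adjS_sym[of B4 B2] adjS_sym[of B5 B2] adjS_sym[of B6 B2] adjS_sym[of B4 B3] adjS_sym[of B5 B3] adjS_sym[of B6 B3] adjS_sym[of B6 B4]
      unfolding F2_V_def F2_E_def adjS_def[symmetric] adj_def[symmetric]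
      by (simp add: doubleton_eq_iff)
  qed
qed

end

context G begin

lemma adjS_symI: "adjS A B \<Longrightarrow> adjS B A"
  using adjS_sym by blast

lemma adjS_mono: "adjS A B \<Longrightarrow> A \<subseteq> A' \<Longrightarrow> B \<subseteq> B' \<Longrightarrow> adjS A' B'"
  unfolding adjS_def by blast

lemma adjS_single: "adj x y \<Longrightarrow> x \<in> A \<Longrightarrow> y \<in> B \<Longrightarrow> adjS A B"
  unfolding adjS_def by blast

lemma seg_in: "i \<le> k \<Longrightarrow> k < j \<Longrightarrow> p!k \<in> seg p i j"
  unfolding seg_def by blast

lemma seg_far:
  assumes "ipath p" "a \<in> seg p i j" "b \<in> seg p k l" "j < k" "l \<le> length p"
  shows "\<not> adj a b"
proof -
  obtain m where m: "i \<le> m" "m < j" "a = p!m" using assms(2) unfolding seg_def by blast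
  obtain m' where m': "k \<le> m'" "m' < l" "b = p!m'" using assms(3) unfolding seg_def by blast
  have "m < length p" "m' < length p" using m m' assms by auto
  then have "adj a b = (m = Suc m' \<or> m' = Suc m)" using ipath_adj[OF assms(1), of m m'] m(3) m'(3) by simp
  then show ?thesis using m m' assms(4) by simp
qed

lemma seg_far_adjS:
  assumes "ipath p" "j < k" "l \<le> length p"
  shows "\<not> adjS (seg p i j) (seg p k l)"
  unfolding adjS_def
proof (intro notI, elim bexE)
  fix a b assume ab: "a \<in> seg p i j" "b \<in> seg p k l" "adj a b"
  show False using seg_far[OF assms(1) ab(1,2) assms(2,3)] ab(3) by simp
qed

lemma seg_disj:
  assumes "ipath p" "j \<le> k" "l \<le> length p"
  shows "seg p i j \<inter> seg p k l = {}"
proof (rule ccontr)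
  assume "seg p i j \<inter> seg p k l \<noteq> {}"
  then obtain a where a1: "a \<in> seg p i j" and a2: "a \<in> seg p k l" by blast
  obtain m where m: "i \<le> m" "m < j" "a = p!m" using a1 unfolding seg_def by blast
  obtain m' where m': "k \<le> m'" "m' < l" "a = p!m'" using a2 unfolding seg_def by blast
  have ml: "m < length p" "m' < length p" using m(2) m'(1,2) assms(2,3) by linarith+
  have "p!m = p!m'" using m(3) m'(3) by (rule trans[OF sym])
  then have "m = m'" using iffD1[OF ipath_eq[OF assms(1) ml]] by blast
  then show False using m(2) m'(1) assms(2) by linarith
qed

lemma seg_notin:
  assumes "ipath p" "j \<le> length p" "m < length p" "m < i \<or> j \<le> m"
  shows "p!m \<notin> seg p i j"
proof
  assume "p!m \<in> seg p i j"
  then obtain m' where m': "i \<le> m'" "m' < j" "p!m = p!m'" unfolding seg_def by blast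
  have ml: "m < length p" "m' < length p" using m' assms(2,3) by linarith+
  have "m = m'" using iffD1[OF ipath_eq[OF assms(1) ml]] m'(3) by blast
  then show False using m' assms(4) by linarith
qed

lemma seg_subset_set: "j \<le> length p \<Longrightarrow> seg p i j \<subseteq> set p"
  unfolding seg_def by auto

lemma L3:
  assumes noK4: "\<not> induced_minor K4_V K4_E V E" and H: "hole V E C"
    and QV: "Q \<subseteq> V" and QC: "Q \<inter> C = {}" and cQ: "conn Q"
    and xyz: "x \<in> C" "y \<in> C" "z \<in> C" "x \<noteq> y" "x \<noteq> z" "y \<noteq> z"
    and a: "adjS {x} Q" "adjS {y} Q" "adjS {z} Q"
  shows False
proof -
  obtain p where ip: "ipath p" and sp: "set p = C - {x}" and lp: "length p + 1 = card C"
    and av: "\<forall>k<length p. adj x (p!k) \<longleftrightarrow> k = 0 \<or> k = length p - 1"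
    using hole_path[OF H xyz(1)] by blast
  have CV: "C \<subseteq> V" and c4: "card C \<ge> 4" using hole_basic[OF H] by auto
  have ysp: "y \<in> set p" and zsp: "z \<in> set p" using sp xyz by auto
  obtain i where i: "i < length p" "p!i = y" using ysp by (auto simp: in_set_conv_nth)
  obtain j where j: "j < length p" "p!j = z" using zsp by (auto simp: in_set_conv_nth)
  have ij: "i \<noteq> j" using i j xyz(6) by auto
  have main: "False" if ij': "i' < j'" "j' < length p" "adjS {p!i'} Q" "adjS {p!j'} Q" for i' j'
  proof -
    let ?n = "length p"
    have ne: "Q \<noteq> {}" using cQ unfolding conn_iff by blast
    have xp: "x \<notin> set p" using sp by simp
    have s1: "seg p 0 j' \<subseteq> set p" "seg p j' ?n \<subseteq> set p" using seg_subset_set ij' by auto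
    have pV: "set p \<subseteq> V" using sp CV by auto
    have "induced_minor K4_V K4_E V E"
    proof (rule K4_gen[of Q "{x}" "seg p 0 j'" "seg p j' ?n"])
      show "Q \<noteq> {}" "{x} \<noteq> {}" "seg p 0 j' \<noteq> {}" "seg p j' ?n \<noteq> {}"
        using ne seg_ne ij' by auto
      show "Q \<subseteq> V" "{x} \<subseteq> V" "seg p 0 j' \<subseteq> V" "seg p j' ?n \<subseteq> V"
        using QV xyz(1) CV s1 pV by auto
      show "conn Q" "conn {x}" "conn (seg p 0 j')" "conn (seg p j' ?n)"
        using cQ conn_single seg_conn[OF ip] ij' by auto
      show "Q \<inter> {x} = {}" "Q \<inter> seg p 0 j' = {}" "Q \<inter> seg p j' ?n = {}"
        using QC xyz(1) s1 sp by auto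
      show "{x} \<inter> seg p 0 j' = {}" "{x} \<inter> seg p j' ?n = {}" using xp s1 by auto
      show "seg p 0 j' \<inter> seg p j' ?n = {}" using seg_disj[OF ip] by simp
      show "adjS Q {x}" using adjS_symI[OF a(1)] .
      have "p!i' \<in> seg p 0 j'" using seg_in[of 0 i' j' p] ij' by simp
      then show "adjS Q (seg p 0 j')" using adjS_mono[OF adjS_symI[OF ij'(3)], of Q] by blast
      have "p!j' \<in> seg p j' ?n" using seg_in[of j' j' ?n p] ij' by simp
      then show "adjS Q (seg p j' ?n)" using adjS_mono[OF adjS_symI[OF ij'(4)], of Q] by blast
      have "p \<noteq> []" using ij' by auto
      then have "adj x (p!0)" using av[rule_format, of 0] by simp
      then show "adjS {x} (seg p 0 j')" using seg_in[of 0 0 j' p] ij' adjS_single by simp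
      have "adj x (p!(?n - 1))" using av[rule_format, of "?n - 1"] ij' by simp
      moreover have "p!(?n - 1) \<in> seg p j' ?n" using seg_in[of j' "?n - 1" ?n p] ij' by simp
      ultimately show "adjS {x} (seg p j' ?n)" using adjS_single by simp
      have "adj (p!(j'-1)) (p!j')" using ipath_adj[OF ip, of "j'-1" j'] ij' by simp
      moreover have "p!(j'-1) \<in> seg p 0 j'" using seg_in[of 0 "j'-1" j' p] ij' by simp
      moreover have "p!j' \<in> seg p j' ?n" using seg_in[of j' j' ?n p] ij' by simp
      ultimately show "adjS (seg p 0 j') (seg p j' ?n)" using adjS_single by blast
    qed
    then show False using noK4 by simp
  qed
  show False
  proof (cases "i < j")
    case True then show False using main[of i j] i j a by simp
  next
    case False then show False using main[of j i] i j a ij by simp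
  qed
qed

end

context G begin

lemma adjS_none: assumes "\<forall>a\<in>A. \<not> adjS {a} B" shows "\<not> adjS B A"
proof
  assume "adjS B A"
  then obtain b a where ba: "b \<in> B" "a \<in> A" "adj b a" unfolding adjS_def by blast
  then have "adj a b" using adj_sym[of b a] by simp
  then have "adjS {a} B" using ba(1) unfolding adjS_def by blast
  then show False using assms ba(2) by blast
qed

lemma adjS_singleI: "adj x y \<Longrightarrow> y \<in> B \<Longrightarrow> adjS {x} B"
  unfolding adjS_def by blast

lemma L2:
  assumes noK4: "\<not> induced_minor K4_V K4_E V E" and noK23: "\<not> induced_minor K23_V K23_E V E"
    and H: "hole V E C"
    and QV: "Q \<subseteq> V" and QC: "Q \<inter> C = {}" and cQ: "conn Q"
    and xy: "x \<in> C" "y \<in> C" "x \<noteq> y"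
    and a: "adjS {x} Q" "adjS {y} Q"
  shows "adj x y"
proof (rule ccontr)
  assume nxy: "\<not> adj x y"
  obtain p where ip: "ipath p" and sp: "set p = C - {x}" and lp: "length p + 1 = card C"
    and av: "\<forall>k<length p. adj x (p!k) \<longleftrightarrow> k = 0 \<or> k = length p - 1"
    using hole_path[OF H xy(1)] by blast
  let ?n = "length p"
  have CV: "C \<subseteq> V" and c4: "card C \<ge> 4" using hole_basic[OF H] by auto
  have n3: "?n \<ge> 3" using lp c4 by simp
  have ysp: "y \<in> set p" using sp xy by auto
  obtain i where i: "i < ?n" "p!i = y" using ysp by (auto simp: in_set_conv_nth)
  have "\<not> adj x (p!i)" using nxy i by simp
  then have i0: "i \<noteq> 0" "i \<noteq> ?n - 1" using av[rule_format, OF i(1)] by auto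
  have xp: "x \<notin> set p" using sp by simp
  have third: "\<not> adjS {p!m} Q" if m: "m < ?n" "m \<noteq> i" for m
  proof
    assume am: "adjS {p!m} Q"
    have pmC: "p!m \<in> C" using m sp nth_mem[OF m(1)] by auto
    have "p!m \<noteq> x" using xp nth_mem[OF m(1)] by auto
    moreover have "p!m \<noteq> y" using i m iffD1[OF ipath_eq[OF ip m(1) i(1)]] by auto
    ultimately show False using L3[OF noK4 H QV QC cQ xy(1,2) pmC xy(3) _ _ a am] by auto
  qed
  have nQ1: "\<not> adjS Q (seg p 0 i)"
    by (rule adjS_none) (use third i in \<open>auto simp: seg_def\<close>)
  have nQ2: "\<not> adjS Q (seg p (Suc i) ?n)"
    by (rule adjS_none) (use third i in \<open>auto simp: seg_def\<close>)
  have s1: "seg p 0 i \<subseteq> set p" "seg p (Suc i) ?n \<subseteq> set p" using seg_subset_set i by auto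
  have pV: "set p \<subseteq> V" using sp CV by auto
  have ne: "Q \<noteq> {}" using cQ unfolding conn_iff by blast
  have "induced_minor K23_V K23_E V E"
  proof (rule K23_gen[of "{x}" "{y}" Q "seg p 0 i" "seg p (Suc i) ?n"])
    show "{x} \<noteq> {}" "{y} \<noteq> {}" "Q \<noteq> {}" "seg p 0 i \<noteq> {}" "seg p (Suc i) ?n \<noteq> {}"
      using ne seg_ne i i0 by auto
    show "{x} \<subseteq> V" "{y} \<subseteq> V" "Q \<subseteq> V" "seg p 0 i \<subseteq> V" "seg p (Suc i) ?n \<subseteq> V"
      using QV xy CV s1 pV by auto
    show "conn {x}" "conn {y}" "conn Q" "conn (seg p 0 i)" "conn (seg p (Suc i) ?n)"
      using cQ conn_single seg_conn[OF ip] i i0 by auto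
    show "{x} \<inter> {y} = {}" "{x} \<inter> Q = {}" "{x} \<inter> seg p 0 i = {}" "{x} \<inter> seg p (Suc i) ?n = {}"
      using xy QC xp s1 by auto
    have "y \<notin> seg p 0 i" "y \<notin> seg p (Suc i) ?n" using seg_notin[OF ip, of _ i] i by auto
    then show "{y} \<inter> Q = {}" "{y} \<inter> seg p 0 i = {}" "{y} \<inter> seg p (Suc i) ?n = {}"
      using xy QC by auto
    show "Q \<inter> seg p 0 i = {}" "Q \<inter> seg p (Suc i) ?n = {}" using QC s1 sp by auto
    show "seg p 0 i \<inter> seg p (Suc i) ?n = {}" using seg_disj[OF ip] by simp
    show "adjS {x} Q" "adjS {y} Q" using a .
    have "p \<noteq> []" using i by auto
    then have "adj x (p!0)" using av[rule_format, of 0] by simp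
    then show "adjS {x} (seg p 0 i)" using seg_in[of 0 0 i p] i0 adjS_singleI by simp
    have "adj x (p!(?n - 1))" using av[rule_format, of "?n - 1"] i by simp
    moreover have "p!(?n - 1) \<in> seg p (Suc i) ?n" using seg_in[of "Suc i" "?n - 1" ?n p] i i0 by simp
    ultimately show "adjS {x} (seg p (Suc i) ?n)" using adjS_singleI by simp
    have "adj (p!i) (p!(i-1))" using ipath_adj[OF ip, of i "i-1"] i i0 by simp
    moreover have "p!(i-1) \<in> seg p 0 i" using seg_in[of 0 "i-1" i p] i0 by simp
    ultimately show "adjS {y} (seg p 0 i)" using adjS_singleI i by simp
    have "adj (p!i) (p!(Suc i))" using ipath_adj[OF ip, of i "Suc i"] i i0 by simp
    moreover have "p!(Suc i) \<in> seg p (Suc i) ?n" using seg_in[of "Suc i" "Suc i" ?n p] i i0 by simp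
    ultimately show "adjS {y} (seg p (Suc i) ?n)" using adjS_singleI i by simp
    show "\<not> adjS {x} {y}" using nxy unfolding adjS_def by simp
    show "\<not> adjS Q (seg p 0 i)" "\<not> adjS Q (seg p (Suc i) ?n)" using nQ1 nQ2 .
    show "\<not> adjS (seg p 0 i) (seg p (Suc i) ?n)" using seg_far_adjS[OF ip] by simp
  qed
  then show False using noK23 by simp
qed

end

context G begin

lemma seg_adj_next:
  assumes "ipath p" "i < j" "j < k" "k \<le> length p"
  shows "adjS (seg p i j) (seg p j k)"
proof -
  have "adj (p!(j-1)) (p!j)" using ipath_adj[OF assms(1), of "j-1" j] assms by simp
  moreover have "p!(j-1) \<in> seg p i j" using seg_in[of i "j-1" j p] assms by simp
  moreover have "p!j \<in> seg p j k" using seg_in[of j j k p] assms by simp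
  ultimately show ?thesis unfolding adjS_def by blast
qed

lemma seg_noadj:
  assumes "\<forall>m. i \<le> m \<and> m < j \<longrightarrow> \<not> adjS {p!m} Z"
  shows "\<not> adjS Z (seg p i j)"
  by (rule adjS_none) (use assms in \<open>auto simp: seg_def\<close>)

lemma seg_adjZ:
  assumes "adjS {p!m} Z" "i \<le> m" "m < j"
  shows "adjS Z (seg p i j)"
proof -
  have "p!m \<in> seg p i j" using seg_in assms(2,3) by blast
  then show ?thesis using adjS_mono[OF adjS_symI[OF assms(1)], of Z "seg p i j"] by blast
qed

lemma F2_paths:
  assumes noF2: "\<not> induced_minor F2_V F2_E V E"
    and ZV: "Z \<subseteq> V" and cZ: "conn Z"
    and iA: "ipath A" and iB: "ipath B" and lA: "length A \<ge> 3" and lB: "length B \<ge> 3"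
    and AV: "set A \<subseteq> V" and BV: "set B \<subseteq> V"
    and dZA: "Z \<inter> set A = {}" and dZB: "Z \<inter> set B = {}" and dAB: "set A \<inter> set B = {}"
    and aA: "\<forall>k<length A. adjS {A!k} Z \<longleftrightarrow> (k = 0 \<or> k = length A - 1)"
    and aB: "\<forall>k<length B. adjS {B!k} Z \<longleftrightarrow> (k = 0 \<or> k = length B - 1)"
    and nAB: "\<not> adjS (set A) (set B)"
  shows False
proof -
  let ?a = "length A" and ?b = "length B"
  have sA: "seg A i j \<subseteq> set A" if "j \<le> ?a" for i j using seg_subset_set that by blast
  have sB: "seg B i j \<subseteq> set B" if "j \<le> ?b" for i j using seg_subset_set that by blast
  have nAB': "\<not> adjS X Y" if "X \<subseteq> set A" "Y \<subseteq> set B" for X Y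
    using adjS_mono[of X Y "set A" "set B"] nAB that by blast
  have ne: "Z \<noteq> {}" using cZ unfolding conn_iff by blast
  have sAV: "seg A i j \<subseteq> V" if "j \<le> ?a" for i j using sA[OF that] AV by blast
  have sBV: "seg B i j \<subseteq> V" if "j \<le> ?b" for i j using sB[OF that] BV by blast
  have zA: "Z \<inter> seg A i j = {}" if "j \<le> ?a" for i j using sA[OF that] dZA by blast
  have zB: "Z \<inter> seg B i j = {}" if "j \<le> ?b" for i j using sB[OF that] dZB by blast
  have "induced_minor F2_V F2_E V E"
  proof (rule F2_gen[of Z "seg A 0 1" "seg A 1 (?a - 1)" "seg A (?a - 1) ?a"
        "seg B 0 1" "seg B 1 (?b - 1)" "seg B (?b - 1) ?b"])
    show "Z \<noteq> {}" using ne .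
    show "seg A 0 1 \<noteq> {}" "seg A 1 (?a - 1) \<noteq> {}" "seg A (?a - 1) ?a \<noteq> {}"
      "seg B 0 1 \<noteq> {}" "seg B 1 (?b - 1) \<noteq> {}" "seg B (?b - 1) ?b \<noteq> {}"
      using seg_ne lA lB by auto
    show "Z \<subseteq> V" using ZV .
    show "seg A 0 1 \<subseteq> V" "seg A 1 (?a - 1) \<subseteq> V" "seg A (?a - 1) ?a \<subseteq> V"
      using sAV lA by auto
    show "seg B 0 1 \<subseteq> V" "seg B 1 (?b - 1) \<subseteq> V" "seg B (?b - 1) ?b \<subseteq> V"
      using sBV lB by auto
    show "conn Z" using cZ .
    show "conn (seg A 0 1)" "conn (seg A 1 (?a - 1))" "conn (seg A (?a - 1) ?a)"
      using seg_conn[OF iA] lA by auto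
    show "conn (seg B 0 1)" "conn (seg B 1 (?b - 1))" "conn (seg B (?b - 1) ?b)"
      using seg_conn[OF iB] lB by auto
    show "Z \<inter> seg A 0 1 = {}" "Z \<inter> seg A 1 (?a - 1) = {}" "Z \<inter> seg A (?a - 1) ?a = {}"
      using zA lA by auto
    show "Z \<inter> seg B 0 1 = {}" "Z \<inter> seg B 1 (?b - 1) = {}" "Z \<inter> seg B (?b - 1) ?b = {}"
      using zB lB by auto
    show "seg A 0 1 \<inter> seg A 1 (?a - 1) = {}" "seg A 0 1 \<inter> seg A (?a - 1) ?a = {}"
      "seg A 1 (?a - 1) \<inter> seg A (?a - 1) ?a = {}"
      using seg_disj[OF iA] lA by auto
    show "seg B 0 1 \<inter> seg B 1 (?b - 1) = {}" "seg B 0 1 \<inter> seg B (?b - 1) ?b = {}"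
      "seg B 1 (?b - 1) \<inter> seg B (?b - 1) ?b = {}"
      using seg_disj[OF iB] lB by auto
    have dd: "X \<inter> Y = {}" if "X \<subseteq> set A" "Y \<subseteq> set B" for X Y using dAB that by blast
    show "seg A 0 1 \<inter> seg B 0 1 = {}" "seg A 0 1 \<inter> seg B 1 (?b - 1) = {}" "seg A 0 1 \<inter> seg B (?b - 1) ?b = {}"
      "seg A 1 (?a - 1) \<inter> seg B 0 1 = {}" "seg A 1 (?a - 1) \<inter> seg B 1 (?b - 1) = {}" "seg A 1 (?a - 1) \<inter> seg B (?b - 1) ?b = {}"
      "seg A (?a - 1) ?a \<inter> seg B 0 1 = {}" "seg A (?a - 1) ?a \<inter> seg B 1 (?b - 1) = {}" "seg A (?a - 1) ?a \<inter> seg B (?b - 1) ?b = {}"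
      using dd sA sB lA lB by simp_all
    have A0: "0 < ?a" "?a - 1 < ?a" and B0: "0 < ?b" "?b - 1 < ?b" using lA lB by auto
    have "adjS {A!0} Z" using aA[rule_format, OF A0(1)] by simp
    then show "adjS Z (seg A 0 1)" using seg_adjZ[of A 0 Z 0 1] by simp
    have "adjS {A!(?a - 1)} Z" using aA[rule_format, OF A0(2)] by simp
    then show "adjS Z (seg A (?a - 1) ?a)" using seg_adjZ[of A "?a - 1" Z "?a - 1" ?a] lA by simp
    have "adjS {B!0} Z" using aB[rule_format, OF B0(1)] by simp
    then show "adjS Z (seg B 0 1)" using seg_adjZ[of B 0 Z 0 1] by simp
    have "adjS {B!(?b - 1)} Z" using aB[rule_format, OF B0(2)] by simp
    then show "adjS Z (seg B (?b - 1) ?b)" using seg_adjZ[of B "?b - 1" Z "?b - 1" ?b] lB by simp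
    show "adjS (seg A 0 1) (seg A 1 (?a - 1))" "adjS (seg A 1 (?a - 1)) (seg A (?a - 1) ?a)"
      using seg_adj_next[OF iA] lA by auto
    show "adjS (seg B 0 1) (seg B 1 (?b - 1))" "adjS (seg B 1 (?b - 1)) (seg B (?b - 1) ?b)"
      using seg_adj_next[OF iB] lB by auto
    show "\<not> adjS Z (seg A 1 (?a - 1))" by (rule seg_noadj) (use aA in auto)
    show "\<not> adjS Z (seg B 1 (?b - 1))" by (rule seg_noadj) (use aB in auto)
    show "\<not> adjS (seg A 0 1) (seg A (?a - 1) ?a)" using seg_far_adjS[OF iA] lA by simp
    show "\<not> adjS (seg B 0 1) (seg B (?b - 1) ?b)" using seg_far_adjS[OF iB] lB by simp
    show "\<not> adjS (seg A 0 1) (seg B 0 1)" "\<not> adjS (seg A 0 1) (seg B 1 (?b - 1))" "\<not> adjS (seg A 0 1) (seg B (?b - 1) ?b)"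
      "\<not> adjS (seg A 1 (?a - 1)) (seg B 0 1)" "\<not> adjS (seg A 1 (?a - 1)) (seg B 1 (?b - 1))" "\<not> adjS (seg A 1 (?a - 1)) (seg B (?b - 1) ?b)"
      "\<not> adjS (seg A (?a - 1) ?a) (seg B 0 1)" "\<not> adjS (seg A (?a - 1) ?a) (seg B 1 (?b - 1))" "\<not> adjS (seg A (?a - 1) ?a) (seg B (?b - 1) ?b)"
      using nAB' sA sB lA lB by simp_all
  qed
  then show False using noF2 by simp
qed

end

context G begin

lemma F1_paths:
  assumes noF1: "\<not> induced_minor F1_V F1_E V E"
    and Z0V: "Z0 \<subseteq> V" and Z3V: "Z3 \<subseteq> V" and cZ0: "conn Z0" and cZ3: "conn Z3"
    and dZ: "Z0 \<inter> Z3 = {}" and aZ: "adjS Z0 Z3"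
    and iA: "ipath A" and iB: "ipath B" and lA: "length A \<ge> 2" and lB: "length B \<ge> 2"
    and AV: "set A \<subseteq> V" and BV: "set B \<subseteq> V"
    and dZA: "Z0 \<inter> set A = {}" "Z3 \<inter> set A = {}" and dZB: "Z0 \<inter> set B = {}" "Z3 \<inter> set B = {}"
    and dAB: "set A \<inter> set B = {}"
    and aA0: "\<forall>k<length A. adjS {A!k} Z0 \<longleftrightarrow> k = length A - 1"
    and aA3: "\<forall>k<length A. adjS {A!k} Z3 \<longleftrightarrow> k = 0"
    and aB0: "\<forall>k<length B. adjS {B!k} Z0 \<longleftrightarrow> k = length B - 1"
    and aB3: "\<forall>k<length B. adjS {B!k} Z3 \<longleftrightarrow> k = 0"
    and nAB: "\<not> adjS (set A) (set B)"
  shows False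
proof -
  let ?a = "length A" and ?b = "length B"
  have sA: "seg A i j \<subseteq> set A" if "j \<le> ?a" for i j using seg_subset_set that by blast
  have sB: "seg B i j \<subseteq> set B" if "j \<le> ?b" for i j using seg_subset_set that by blast
  have nAB': "\<not> adjS X Y" if "X \<subseteq> set A" "Y \<subseteq> set B" for X Y
    using adjS_mono[of X Y "set A" "set B"] nAB that by blast
  have sAV: "seg A i j \<subseteq> V" if "j \<le> ?a" for i j using sA[OF that] AV by blast
  have sBV: "seg B i j \<subseteq> V" if "j \<le> ?b" for i j using sB[OF that] BV by blast
  have z0A: "Z0 \<inter> seg A i j = {}" if "j \<le> ?a" for i j using sA[OF that] dZA by blast
  have z3A: "Z3 \<inter> seg A i j = {}" if "j \<le> ?a" for i j using sA[OF that] dZA by blast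
  have z0B: "Z0 \<inter> seg B i j = {}" if "j \<le> ?b" for i j using sB[OF that] dZB by blast
  have z3B: "Z3 \<inter> seg B i j = {}" if "j \<le> ?b" for i j using sB[OF that] dZB by blast
  have A0: "0 < ?a" "?a - 1 < ?a" and B0: "0 < ?b" "?b - 1 < ?b" using lA lB by auto
  have "induced_minor F1_V F1_E V E"
  proof (rule F1_gen[of Z0 "seg A 1 ?a" "seg A 0 1" Z3 "seg B 0 1" "seg B 1 ?b"])
    show "Z0 \<noteq> {}" "Z3 \<noteq> {}" using cZ0 cZ3 unfolding conn_iff by blast+
    show "seg A 1 ?a \<noteq> {}" "seg A 0 1 \<noteq> {}" "seg B 0 1 \<noteq> {}" "seg B 1 ?b \<noteq> {}"
      using seg_ne lA lB by auto
    show "Z0 \<subseteq> V" "Z3 \<subseteq> V" using Z0V Z3V .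
    show "seg A 1 ?a \<subseteq> V" "seg A 0 1 \<subseteq> V" using sAV lA by auto
    show "seg B 0 1 \<subseteq> V" "seg B 1 ?b \<subseteq> V" using sBV lB by auto
    show "conn Z0" "conn Z3" using cZ0 cZ3 .
    show "conn (seg A 1 ?a)" "conn (seg A 0 1)" using seg_conn[OF iA] lA by auto
    show "conn (seg B 0 1)" "conn (seg B 1 ?b)" using seg_conn[OF iB] lB by auto
    show "Z0 \<inter> seg A 1 ?a = {}" "Z0 \<inter> seg A 0 1 = {}" using z0A lA by auto
    show "Z0 \<inter> Z3 = {}" using dZ .
    show "Z0 \<inter> seg B 0 1 = {}" "Z0 \<inter> seg B 1 ?b = {}" using z0B lB by auto
    show "seg A 1 ?a \<inter> seg A 0 1 = {}" using seg_disj[OF iA, of 1 1 ?a 0] by blast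
    show "seg A 1 ?a \<inter> Z3 = {}" using z3A[of ?a 1] by blast
    show "seg A 0 1 \<inter> Z3 = {}" using z3A[of 1 0] lA by auto
    show "Z3 \<inter> seg B 0 1 = {}" "Z3 \<inter> seg B 1 ?b = {}" using z3B lB by auto
    show "seg B 0 1 \<inter> seg B 1 ?b = {}" using seg_disj[OF iB] by simp
    have dd: "X \<inter> Y = {}" if "X \<subseteq> set A" "Y \<subseteq> set B" for X Y using dAB that by blast
    show "seg A 1 ?a \<inter> seg B 0 1 = {}" "seg A 1 ?a \<inter> seg B 1 ?b = {}"
      "seg A 0 1 \<inter> seg B 0 1 = {}" "seg A 0 1 \<inter> seg B 1 ?b = {}"
      using dd sA sB lA lB by simp_all
    have "adjS {A!(?a - 1)} Z0" using aA0[rule_format, OF A0(2)] by simp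
    then show "adjS Z0 (seg A 1 ?a)" using seg_adjZ[of A "?a - 1" Z0 1 ?a] lA by simp
    show "adjS (seg A 1 ?a) (seg A 0 1)" using adjS_symI[OF seg_adj_next[OF iA, of 0 1 ?a]] lA by simp
    have "adjS {A!0} Z3" using aA3[rule_format, OF A0(1)] by simp
    then show "adjS (seg A 0 1) Z3" using adjS_symI[OF seg_adjZ[of A 0 Z3 0 1]] by simp
    have "adjS {B!0} Z3" using aB3[rule_format, OF B0(1)] by simp
    then show "adjS Z3 (seg B 0 1)" using seg_adjZ[of B 0 Z3 0 1] by simp
    show "adjS (seg B 0 1) (seg B 1 ?b)" using seg_adj_next[OF iB, of 0 1 ?b] lB by simp
    have "adjS {B!(?b - 1)} Z0" using aB0[rule_format, OF B0(2)] by simp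
    then show "adjS Z0 (seg B 1 ?b)" using seg_adjZ[of B "?b - 1" Z0 1 ?b] lB by simp
    show "adjS Z0 Z3" using aZ .
    have "\<not> adjS {A!0} Z0" using aA0[rule_format, OF A0(1)] lA by simp
    then show "\<not> adjS Z0 (seg A 0 1)" by (intro seg_noadj) (auto simp: le_less_Suc_eq)
    have "\<not> adjS {B!0} Z0" using aB0[rule_format, OF B0(1)] lB by simp
    then show "\<not> adjS Z0 (seg B 0 1)" by (intro seg_noadj) (auto simp: le_less_Suc_eq)
    show "\<not> adjS (seg A 1 ?a) Z3" using adjS_symI seg_noadj[of 1 ?a A Z3] aA3 by auto
    show "\<not> adjS Z3 (seg B 1 ?b)" by (rule seg_noadj) (use aB3 in auto)
    show "\<not> adjS (seg A 1 ?a) (seg B 0 1)" "\<not> adjS (seg A 1 ?a) (seg B 1 ?b)"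
      "\<not> adjS (seg A 0 1) (seg B 0 1)" "\<not> adjS (seg A 0 1) (seg B 1 ?b)"
      using nAB' sA sB lA lB by simp_all
  qed
  then show False using noF1 by simp
qed

end

context G begin

lemma adjS_ss: "adjS {a} {b} \<longleftrightarrow> adj a b"
  unfolding adjS_def by simp

lemma adjS_s2: "adjS {a} {b,c} \<longleftrightarrow> adj a b \<or> adj a c"
  unfolding adjS_def by simp

lemma set_seg_all: "set p = seg p 0 (length p)"
  unfolding seg_def by (auto simp: in_set_conv_nth)

lemma conn_set: "ipath p \<Longrightarrow> p \<noteq> [] \<Longrightarrow> conn (set p)"
  using seg_conn[of p 0 "length p"] set_seg_all[of p] by simp

lemma tail_facts:
  assumes ip: "ipath s" and ls: "length s \<ge> 3"
    and av: "\<forall>k<length s. adj v (s!k) \<longleftrightarrow> k = 0 \<or> k = length s - 1"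
  shows "ipath (drop 1 s)" "length (drop 1 s) = length s - 1"
    "\<forall>k<length (drop 1 s). adjS {drop 1 s ! k} {v} \<longleftrightarrow> k = length (drop 1 s) - 1"
    "\<forall>k<length (drop 1 s). adjS {drop 1 s ! k} {s!0} \<longleftrightarrow> k = 0"
    "set (drop 1 s) = set s - {s!0}"
proof -
  show "ipath (drop 1 s)" using ipath_drop[OF ip] .
  show "length (drop 1 s) = length s - 1" by simp
  show "\<forall>k<length (drop 1 s). adjS {drop 1 s ! k} {v} \<longleftrightarrow> k = length (drop 1 s) - 1"
  proof (intro allI impI)
    fix k assume k: "k < length (drop 1 s)"
    then have k1: "Suc k < length s" by simp
    have "adjS {drop 1 s ! k} {v} = adj v (s ! Suc k)" using k adj_sym[of "s!Suc k" v] by (simp add: adjS_ss)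
    also have "\<dots> = (Suc k = 0 \<or> Suc k = length s - 1)" using av k1 by blast
    also have "\<dots> = (k = length (drop 1 s) - 1)" using k ls by auto
    finally show "adjS {drop 1 s ! k} {v} = (k = length (drop 1 s) - 1)" .
  qed
  show "\<forall>k<length (drop 1 s). adjS {drop 1 s ! k} {s!0} \<longleftrightarrow> k = 0"
  proof (intro allI impI)
    fix k assume k: "k < length (drop 1 s)"
    then have k1: "Suc k < length s" by simp
    have e1: "adjS {drop 1 s ! k} {s!0} = adj (s ! Suc k) (s!0)" using k by (simp add: adjS_ss)
    have s0: "0 < length s" using ls by linarith
    have "adj (s ! Suc k) (s!0) = (Suc k = Suc 0 \<or> 0 = Suc (Suc k))" using ipath_adj[OF ip k1 s0] by simp
    then show "adjS {drop 1 s ! k} {s!0} = (k = 0)" using e1 by auto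
  qed
  have "s = s!0 # drop 1 s" using ls by (cases s) auto
  moreover have "distinct s" using ipath_distinct[OF ip] .
  ultimately show "set (drop 1 s) = set s - {s!0}"
    by (metis Diff_insert_absorb distinct.simps(2) list.simps(15))
qed

end

context G begin

lemma set_take_seg: assumes "m \<le> length p" shows "set (take m p) = seg p 0 m"
proof (intro equalityI subsetI)
  fix x assume "x \<in> set (take m p)"
  then obtain i where i: "i < length (take m p)" "take m p ! i = x" by (auto simp: in_set_conv_nth)
  then have "i < m" "x = p!i" by auto
  then show "x \<in> seg p 0 m" using seg_in[of 0 i m p] by simp
next
  fix x assume "x \<in> seg p 0 m"
  then obtain k where k: "k < m" "x = p!k" unfolding seg_def by blast
  then have "take m p ! k = x" "k < length (take m p)" using assms by auto
  then show "x \<in> set (take m p)" using nth_mem by metis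
qed

lemma caseA_beta:
  assumes noK4: "\<not> induced_minor K4_V K4_E V E" and noK23: "\<not> induced_minor K23_V K23_E V E"
    and noF1: "\<not> induced_minor F1_V F1_E V E"
    and H1: "hole V E C1" and H2: "hole V E C2" and vC1: "v \<in> C1" and vC2: "v \<in> C2"
    and ip: "ipath p" and sp: "set p = C2 - {v}" and lp: "length p + 1 = card C2"
    and av: "\<forall>k<length p. adj v (p!k) \<longleftrightarrow> k = 0 \<or> k = length p - 1"
    and j: "j < length p" "p!j \<in> C1" and jmin: "\<forall>k<j. p!k \<notin> C1" and j0: "0 < j"
  shows False
proof -
  let ?n = "length p"
  have C1V: "C1 \<subseteq> V" and c41: "card C1 \<ge> 4" using hole_basic[OF H1] by auto
  have C2V: "C2 \<subseteq> V" and c42: "card C2 \<ge> 4" using hole_basic[OF H2] by auto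
  have n3: "?n \<ge> 3" using lp c42 by simp
  define b where "b = p!j"
  have bC1: "b \<in> C1" using j unfolding b_def by simp
  have vp: "v \<notin> set p" using sp by simp
  have bv: "v \<noteq> b" unfolding b_def using vp nth_mem[OF j(1)] by auto
  define Q where "Q = seg p 0 j"
  have Qsub: "Q \<subseteq> set p" unfolding Q_def using seg_subset_set j by auto
  have pV: "set p \<subseteq> V" using sp C2V by auto
  have QV: "Q \<subseteq> V" using Qsub pV by blast
  have QC: "Q \<inter> C1 = {}" unfolding Q_def seg_def using jmin by auto
  have cQ: "conn Q" unfolding Q_def using seg_conn[OF ip j0] j by simp
  have p0: "0 < ?n" using n3 by linarith
  have "adj v (p!0)" using av[rule_format, OF p0] by simp
  moreover have "p!0 \<in> Q" unfolding Q_def using seg_in[of 0 0 j p] j0 by simp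
  ultimately have a1: "adjS {v} Q" using adjS_singleI by blast
  have "adj (p!j) (p!(j-1))" using ipath_adj[OF ip, of j "j-1"] j j0 by simp
  moreover have "p!(j-1) \<in> Q" unfolding Q_def using seg_in[of 0 "j-1" j p] j0 by simp
  ultimately have a2: "adjS {b} Q" unfolding b_def using adjS_singleI by blast
  have vb: "adj v b" using L2[OF noK4 noK23 H1 QV QC cQ vC1 bC1 bv a1 a2] .
  then have "j = 0 \<or> j = ?n - 1" using av[rule_format, OF j(1)] unfolding b_def by simp
  then have jn: "j = ?n - 1" using j0 by simp
  have third: "\<not> adjS {x} Q" if "x \<in> C1" "x \<noteq> v" "x \<noteq> b" for x
    using L3[OF noK4 H1 QV QC cQ vC1 bC1 that(1) bv] that a1 a2 by metis
  obtain s where ips: "ipath s" and ss: "set s = C1 - {v}" and ls: "length s + 1 = card C1"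
    and s0: "s!0 = b" and avs: "\<forall>k<length s. adj v (s!k) \<longleftrightarrow> k = 0 \<or> k = length s - 1"
    using hole_path_start[OF H1 vC1 bC1 vb] by blast
  have ls3: "length s \<ge> 3" using ls c41 by simp
  note tf = tail_facts[OF ips ls3 avs]
  define A where "A = drop 1 s"
  define B where "B = rev (take (?n - 1) p)"
  have iB: "ipath B" unfolding B_def using ipath_rev[OF ipath_take[OF ip]] .
  have lB: "length B = ?n - 1" unfolding B_def by simp
  have Bk: "B!k = p!(?n - 2 - k)" if "k < ?n - 1" for k
    unfolding B_def using that by (simp add: rev_nth)
  have sB: "set B = Q" unfolding B_def Q_def using set_take_seg[of "?n - 1" p] jn by simp
  have sA: "set A = C1 - {v, b}" unfolding A_def using tf(5) ss s0 by auto
  show False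
  proof (rule F1_paths[OF noF1, of "{v}" "{b}" A B])
    show "{v} \<subseteq> V" "{b} \<subseteq> V" using vC1 bC1 C1V by auto
    show "conn {v}" "conn {b}" using conn_single by auto
    show "{v} \<inter> {b} = {}" using bv by simp
    show "adjS {v} {b}" using vb by (simp add: adjS_ss)
    show "ipath A" unfolding A_def using tf(1) .
    show "ipath B" using iB .
    show "length A \<ge> 2" unfolding A_def using tf(2) ls3 by simp
    show "length B \<ge> 2" using lB n3 by simp
    show "set A \<subseteq> V" using sA C1V by auto
    show "set B \<subseteq> V" using sB QV by simp
    show "{v} \<inter> set A = {}" "{b} \<inter> set A = {}" using sA by auto
    have "b \<notin> Q" unfolding Q_def b_def using seg_notin[OF ip, where i=0 and j=j and m=j] j by simp
    then show "{v} \<inter> set B = {}" "{b} \<inter> set B = {}" using sB Qsub vp by auto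
    show "set A \<inter> set B = {}" using sA sB QC by auto
    show "\<forall>k<length A. adjS {A!k} {v} \<longleftrightarrow> k = length A - 1" unfolding A_def using tf(3) .
    show "\<forall>k<length A. adjS {A!k} {b} \<longleftrightarrow> k = 0" unfolding A_def using tf(4) s0 by simp
    show "\<forall>k<length B. adjS {B!k} {v} \<longleftrightarrow> k = length B - 1"
    proof (intro allI impI)
      fix k assume k: "k < length B"
      have k1: "?n - 2 - k < ?n" using k lB by simp
      have "adjS {B!k} {v} = adj v (p!(?n - 2 - k))"
        using Bk[of k] k lB adj_sym[of v "p!(?n - 2 - k)"] by (simp add: adjS_ss)
      also have "\<dots> = (?n - 2 - k = 0 \<or> ?n - 2 - k = ?n - 1)" using av[rule_format, OF k1] .
      also have "\<dots> = (k = length B - 1)" using k lB n3 by auto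
      finally show "adjS {B!k} {v} = (k = length B - 1)" .
    qed
    show "\<forall>k<length B. adjS {B!k} {b} \<longleftrightarrow> k = 0"
    proof (intro allI impI)
      fix k assume k: "k < length B"
      have k1: "?n - 2 - k < ?n" using k lB by simp
      have k2: "?n - 1 < ?n" using n3 by simp
      have "adjS {B!k} {b} = adj (p!(?n - 2 - k)) (p!(?n - 1))"
        using Bk[of k] k lB jn unfolding b_def by (simp add: adjS_ss)
      also have "\<dots> = (?n - 2 - k = Suc (?n - 1) \<or> ?n - 1 = Suc (?n - 2 - k))"
        using ipath_adj[OF ip k1 k2] .
      also have "\<dots> = (k = 0)" using k lB n3 by auto
      finally show "adjS {B!k} {b} = (k = 0)" .
    qed
    have "\<not> adjS (set B) (set A)"
    proof (rule adjS_none, intro ballI)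
      fix x assume "x \<in> set A"
      then show "\<not> adjS {x} (set B)" using third sA sB by auto
    qed
    then show "\<not> adjS (set A) (set B)" using adjS_sym by blast
  qed
qed

end

context G begin

lemma caseA_alpha:
  assumes noK4: "\<not> induced_minor K4_V K4_E V E" and noK23: "\<not> induced_minor K23_V K23_E V E"
    and noF1: "\<not> induced_minor F1_V F1_E V E" and noF2: "\<not> induced_minor F2_V F2_E V E"
    and H1: "hole V E C1" and H2: "hole V E C2" and vC1: "v \<in> C1" and vC2: "v \<in> C2"
    and ip: "ipath p" and sp: "set p = C2 - {v}" and lp: "length p + 1 = card C2"
    and av: "\<forall>k<length p. adj v (p!k) \<longleftrightarrow> k = 0 \<or> k = length p - 1"
    and none: "\<forall>k<length p. p!k \<notin> C1"
  shows False
proof -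
  let ?n = "length p"
  have C1V: "C1 \<subseteq> V" and c41: "card C1 \<ge> 4" using hole_basic[OF H1] by auto
  have C2V: "C2 \<subseteq> V" and c42: "card C2 \<ge> 4" using hole_basic[OF H2] by auto
  have n3: "?n \<ge> 3" using lp c42 by simp
  have pne: "p \<noteq> []" and p0: "0 < ?n" using n3 by auto
  have pC1: "set p \<inter> C1 = {}" using none by (auto simp: in_set_conv_nth)
  have C12: "x = v" if "x \<in> C1" "x \<in> C2" for x using that pC1 sp by auto
  have pV: "set p \<subseteq> V" using sp C2V by auto
  have cp: "conn (set p)" using conn_set[OF ip pne] .
  have vp: "v \<notin> set p" using sp by simp
  have "adj v (p!0)" using av[rule_format, OF p0] by simp
  then have a1: "adjS {v} (set p)" using adjS_singleI nth_mem[OF p0] by blast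
  show False
  proof (cases "\<exists>c\<in>C1. c \<noteq> v \<and> adjS {c} (set p)")
    case False
    obtain s where ips: "ipath s" and ss: "set s = C1 - {v}" and ls: "length s + 1 = card C1"
      and avs: "\<forall>k<length s. adj v (s!k) \<longleftrightarrow> k = 0 \<or> k = length s - 1"
      using hole_path[OF H1 vC1] by blast
    show False
    proof (rule F2_paths[OF noF2, of "{v}" p s])
      show "{v} \<subseteq> V" using vC1 C1V by auto
      show "conn {v}" using conn_single .
      show "ipath p" "ipath s" using ip ips .
      show "length p \<ge> 3" "length s \<ge> 3" using n3 ls c41 by auto
      show "set p \<subseteq> V" "set s \<subseteq> V" using pV ss C1V by auto
      show "{v} \<inter> set p = {}" "{v} \<inter> set s = {}" using vp ss by auto
      show "set p \<inter> set s = {}" using pC1 ss by auto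
      show "\<forall>k<length p. adjS {p!k} {v} \<longleftrightarrow> (k = 0 \<or> k = length p - 1)"
        using av adj_sym by (simp add: adjS_ss)
      show "\<forall>k<length s. adjS {s!k} {v} \<longleftrightarrow> (k = 0 \<or> k = length s - 1)"
        using avs adj_sym by (simp add: adjS_ss)
      have "\<not> adjS (set p) (set s)"
      proof (rule adjS_none, intro ballI)
        fix a assume "a \<in> set s"
        then show "\<not> adjS {a} (set p)" using False ss by auto
      qed
      then show "\<not> adjS (set p) (set s)" .
    qed
  next
    case True
    then obtain c where cC1: "c \<in> C1" and cv: "c \<noteq> v" and ac: "adjS {c} (set p)" by blast
    have vc: "adj v c" using L2[OF noK4 noK23 H1 pV pC1 cp vC1 cC1 cv[symmetric] a1 ac] .
    obtain q where qp: "q \<in> set p" and cq: "adj c q" using ac unfolding adjS_def by blast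
    obtain s where ips: "ipath s" and ss: "set s = C1 - {v}" and ls: "length s + 1 = card C1"
      and s0: "s!0 = c" and avs: "\<forall>k<length s. adj v (s!k) \<longleftrightarrow> k = 0 \<or> k = length s - 1"
      using hole_path_start[OF H1 vC1 cC1 vc] by blast
    have ls3: "length s \<ge> 3" using ls c41 by simp
    have sne: "s \<noteq> []" and s0l: "0 < length s" using ls3 by auto
    have sV: "set s \<subseteq> V" using ss C1V by auto
    have sC2: "set s \<inter> C2 = {}" using ss C12 by auto
    have cs: "conn (set s)" using conn_set[OF ips sne] .
    have qC2: "q \<in> C2" and qv: "q \<noteq> v" using qp sp by auto
    have cins: "c \<in> set s" using s0 nth_mem[OF s0l] by simp
    have b1: "adjS {v} (set s)" using vc cins adjS_singleI by blast
    have b2: "adjS {q} (set s)" using cq cins adjS_singleI adj_sym[of c q] by simp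
    have vq: "adj v q" using L2[OF noK4 noK23 H2 sV sC2 cs vC2 qC2 qv[symmetric] b1 b2] .
    obtain p' where ip': "ipath p'" and sp': "set p' = C2 - {v}" and lp': "length p' + 1 = card C2"
      and p'0: "p'!0 = q" and av': "\<forall>k<length p'. adj v (p'!k) \<longleftrightarrow> k = 0 \<or> k = length p' - 1"
      using hole_path_start[OF H2 vC2 qC2 vq] by blast
    have lp3: "length p' \<ge> 3" using lp' c42 by simp
    have third1: "\<not> adjS {x} (set p)" if "x \<in> C1" "x \<noteq> v" "x \<noteq> c" for x
      using L3[OF noK4 H1 pV pC1 cp vC1 cC1 that(1) cv[symmetric]] that a1 ac by metis
    have third2: "\<not> adjS {y} (set s)" if "y \<in> C2" "y \<noteq> v" "y \<noteq> q" for y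
      using L3[OF noK4 H2 sV sC2 cs vC2 qC2 that(1) qv[symmetric]] that b1 b2 by metis
    note tfs = tail_facts[OF ips ls3 avs]
    note tfp = tail_facts[OF ip' lp3 av']
    define A where "A = drop 1 s"
    define B where "B = drop 1 p'"
    have sA: "set A = C1 - {v, c}" unfolding A_def using tfs(5) ss s0 by auto
    have sB: "set B = C2 - {v, q}" unfolding B_def using tfp(5) sp' p'0 by auto
    have qC1: "q \<notin> C1" using qp pC1 by auto
    have cC2: "c \<notin> C2" using cC1 cv C12 by auto
    show False
    proof (rule F1_paths[OF noF1, of "{v}" "{c,q}" A B])
      show "{v} \<subseteq> V" "{c,q} \<subseteq> V" using vC1 cC1 qC2 C1V C2V by auto
      show "conn {v}" using conn_single .
      show "conn {c,q}" using conn_pair[OF cq] .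
      show "{v} \<inter> {c,q} = {}" using cv qv by auto
      show "adjS {v} {c,q}" using vc by (simp add: adjS_s2)
      show "ipath A" unfolding A_def using tfs(1) .
      show "ipath B" unfolding B_def using tfp(1) .
      show "length A \<ge> 2" unfolding A_def using ls3 by simp
      show "length B \<ge> 2" unfolding B_def using lp3 by simp
      show "set A \<subseteq> V" "set B \<subseteq> V" using sA sB C1V C2V by auto
      show "{v} \<inter> set A = {}" "{c,q} \<inter> set A = {}" using sA qC1 by auto
      show "{v} \<inter> set B = {}" "{c,q} \<inter> set B = {}" using sB cC2 by auto
      show "set A \<inter> set B = {}" using sA sB C12 by auto
      show "\<forall>k<length A. adjS {A!k} {v} \<longleftrightarrow> k = length A - 1" unfolding A_def using tfs(3) .
      show "\<forall>k<length B. adjS {B!k} {v} \<longleftrightarrow> k = length B - 1" unfolding B_def using tfp(3) .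
      show "\<forall>k<length A. adjS {A!k} {c,q} \<longleftrightarrow> k = 0"
      proof (intro allI impI)
        fix k assume k: "k < length A"
        have Ak: "A!k \<in> set A" using nth_mem[OF k] .
        have "\<not> adj (A!k) q"
        proof
          assume "adj (A!k) q"
          then have "adjS {A!k} (set p)" using qp adjS_singleI by blast
          then show False using third1[of "A!k"] Ak sA by auto
        qed
        moreover have "adj (A!k) c = (k = 0)" using tfs(4)[rule_format, of k] k s0 unfolding A_def
          by (simp add: adjS_ss)
        ultimately show "adjS {A!k} {c,q} = (k = 0)" by (simp add: adjS_s2)
      qed
      show "\<forall>k<length B. adjS {B!k} {c,q} \<longleftrightarrow> k = 0"
      proof (intro allI impI)
        fix k assume k: "k < length B"
        have Bk: "B!k \<in> set B" using nth_mem[OF k] .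
        have "\<not> adj (B!k) c"
        proof
          assume "adj (B!k) c"
          then have "adjS {B!k} (set s)" using cins adjS_singleI by blast
          then show False using third2[of "B!k"] Bk sB by auto
        qed
        moreover have "adj (B!k) q = (k = 0)" using tfp(4)[rule_format, of k] k p'0 unfolding B_def
          by (simp add: adjS_ss)
        ultimately show "adjS {B!k} {c,q} = (k = 0)" by (simp add: adjS_s2)
      qed
      show "\<not> adjS (set A) (set B)"
      proof (rule adjS_none, intro ballI)
        fix b assume b: "b \<in> set B"
        have "\<not> adjS {b} (set s)" using third2[of b] b sB by auto
        moreover have "set A \<subseteq> set s" using sA ss by auto
        ultimately show "\<not> adjS {b} (set A)" using adjS_mono[of "{b}" "set A" "{b}" "set s"] by blast
      qed
    qed
  qed
qed

end

context G begin

lemma caseA: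
  assumes noK4: "\<not> induced_minor K4_V K4_E V E" and noK23: "\<not> induced_minor K23_V K23_E V E"
    and noF1: "\<not> induced_minor F1_V F1_E V E" and noF2: "\<not> induced_minor F2_V F2_E V E"
    and H1: "hole V E C1" and H2: "hole V E C2" and int: "C1 \<inter> C2 \<noteq> {}" and nsub: "\<not> C2 \<subseteq> C1"
  shows False
proof -
  have cg: "connected_graph C2 (induced_edges E C2)" using H2 unfolding hole_def cycle_graph_def by blast
  obtain t where t: "t \<in> C1 \<inter> C2" using int by blast
  obtain w where w: "w \<in> C2" "w \<notin> C1" using nsub by blast
  obtain x y where xy: "x \<in> C1 \<inter> C2" "y \<in> C2 - (C1 \<inter> C2)" "{x,y} \<in> induced_edges E C2"
    using cut_edge[OF cg, of "C1 \<inter> C2" t w] t w by blast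
  have vu: "adj x y" using xy(3) unfolding induced_edges_def adj_def by blast
  have xC1: "x \<in> C1" and xC2: "x \<in> C2" and yC2: "y \<in> C2" and yC1: "y \<notin> C1" using xy by auto
  obtain p where ip: "ipath p" and sp: "set p = C2 - {x}" and lp: "length p + 1 = card C2"
    and p0: "p!0 = y" and av: "\<forall>k<length p. adj x (p!k) \<longleftrightarrow> k = 0 \<or> k = length p - 1"
    using hole_path_start[OF H2 xC2 yC2 vu] by blast
  show False
  proof (cases "\<exists>k<length p. p!k \<in> C1")
    case True
    define j where "j = (LEAST k. k < length p \<and> p!k \<in> C1)"
    have jP: "j < length p \<and> p!j \<in> C1" unfolding j_def using LeastI_ex[OF True] .
    have jmin: "\<forall>k<j. p!k \<notin> C1"
    proof (intro allI impI)
      fix k assume k: "k < j"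
      then have "\<not> (k < length p \<and> p!k \<in> C1)" unfolding j_def by (rule not_less_Least)
      then show "p!k \<notin> C1" using k jP by simp
    qed
    have j0: "0 < j" using jP p0 yC1 by (cases j) auto
    show False using caseA_beta[OF noK4 noK23 noF1 H1 H2 xC1 xC2 ip sp lp av _ _ jmin j0] jP by blast
  next
    case False
    then have "\<forall>k<length p. p!k \<notin> C1" by blast
    then show False using caseA_alpha[OF noK4 noK23 noF1 noF2 H1 H2 xC1 xC2 ip sp lp av] by blast
  qed
qed

lemma comp_conn:
  assumes sW: "s \<in> W"
  shows "conn {z. (s,z) \<in> (rel W)\<^sup>*}" "{z. (s,z) \<in> (rel W)\<^sup>*} \<subseteq> W"
proof -
  define K where "K = {z. (s,z) \<in> (rel W)\<^sup>*}"
  have KW: "z \<in> W" if "(s,z) \<in> (rel W)\<^sup>*" for z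
    using that
  proof (induction rule: rtrancl_induct)
    case base then show ?case using sW .
  next
    case (step y z) then show ?case unfolding rel_def by blast
  qed
  have sK: "(s,z) \<in> (rel K)\<^sup>*" if "(s,z) \<in> (rel W)\<^sup>*" for z
    using that
  proof (induction rule: rtrancl_induct)
    case base then show ?case by simp
  next
    case (step y z)
    have "y \<in> K" "z \<in> K" unfolding K_def using step(1,2) by auto
    moreover have "adj y z" using step(2) unfolding rel_def by blast
    ultimately have "(y,z) \<in> rel K" unfolding rel_def by blast
    then show ?case using step(3) by (rule rtrancl_into_rtrancl[rotated])
  qed
  have "(a,b) \<in> (rel K)\<^sup>*" if "a \<in> K" "b \<in> K" for a b
  proof -
    have "(s,a) \<in> (rel K)\<^sup>*" "(s,b) \<in> (rel K)\<^sup>*" using sK that unfolding K_def by auto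
    then have "(a,s) \<in> (rel K)\<^sup>*" "(s,b) \<in> (rel K)\<^sup>*" using rtrancl_rel_sym by auto
    then show ?thesis by (rule rtrancl_trans)
  qed
  moreover have "s \<in> K" unfolding K_def by simp
  ultimately show "conn {z. (s,z) \<in> (rel W)\<^sup>*}" unfolding conn_iff K_def[symmetric] by blast
  show "{z. (s,z) \<in> (rel W)\<^sup>*} \<subseteq> W" using KW by blast
qed

lemma exQ:
  assumes cG: "connected_graph V E" and C1V: "C1 \<subseteq> V" and C2V: "C2 \<subseteq> V"
    and ne1: "C1 \<noteq> {}" and ne2: "C2 \<noteq> {}" and dj: "C1 \<inter> C2 = {}"
    and noedge: "\<forall>x\<in>C1. \<forall>y\<in>C2. \<not> adj x y"
  shows "\<exists>Q u w. Q \<subseteq> V - C1 - C2 \<and> conn Q \<and> u \<in> C1 \<and> w \<in> C2 \<and> adjS {u} Q \<and> adjS {w} Q"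
proof -
  define W where "W = V - C1 - C2"
  define S where "S = {z. \<exists>s\<in>W. (\<exists>c\<in>C1. adj c s) \<and> (s,z) \<in> (rel W)\<^sup>*}"
  have SW: "S \<subseteq> W" unfolding S_def using comp_conn(2) by blast
  define T where "T = C1 \<union> S"
  have TV: "T \<subseteq> V" unfolding T_def using SW C1V W_def by auto
  obtain t where t: "t \<in> C1" using ne1 by blast
  obtain w0 where w0: "w0 \<in> C2" using ne2 by blast
  have w0T: "w0 \<notin> T" unfolding T_def using w0 dj SW W_def by auto
  obtain x y where xy: "x \<in> T" "y \<in> V - T" "{x,y} \<in> E"
    using cut_edge[OF cG TV, of t w0] t w0 w0T C2V unfolding T_def by blast
  have axy: "adj x y" using xy(3) unfolding adj_def .
  show ?thesis
  proof (cases "x \<in> C1")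
    case True
    have "y \<notin> C2" using noedge True axy by blast
    moreover have "y \<notin> C1" using xy unfolding T_def by blast
    ultimately have "y \<in> W" using xy unfolding W_def by blast
    then have "y \<in> S" unfolding S_def using True axy by blast
    then show ?thesis using xy unfolding T_def by blast
  next
    case False
    then have xS: "x \<in> S" using xy unfolding T_def by blast
    then obtain s c where s: "s \<in> W" "c \<in> C1" "adj c s" "(s,x) \<in> (rel W)\<^sup>*" unfolding S_def by blast
    have xW: "x \<in> W" using xS SW by blast
    have yC1: "y \<notin> C1" using xy unfolding T_def by blast
    show ?thesis
    proof (cases "y \<in> C2")
      case True
      define Q where "Q = {z. (s,z) \<in> (rel W)\<^sup>*}"
      have "conn Q" "Q \<subseteq> W" unfolding Q_def using comp_conn[OF s(1)] by auto
      moreover have "adjS {c} Q" unfolding Q_def using s(3) adjS_singleI[of c s] by simp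
      moreover have "adjS {y} Q" unfolding Q_def using s(4) adjS_singleI[of y x] axy adj_sym[of x y] by simp
      ultimately show ?thesis using s(2) True unfolding W_def by blast
    next
      case False
      then have "y \<in> W" using xy yC1 unfolding W_def by blast
      then have "(x,y) \<in> rel W" using xW axy unfolding rel_def by blast
      then have "(s,y) \<in> (rel W)\<^sup>*" using rtrancl_into_rtrancl[OF s(4)] by blast
      then have "y \<in> S" unfolding S_def using s(1,2,3) by blast
      then show ?thesis using xy unfolding T_def by blast
    qed
  qed
qed

lemma hole4:
  assumes V: "a \<in> V" "b \<in> V" "c \<in> V" "d \<in> V"
    and dist: "a \<noteq> b" "a \<noteq> c" "a \<noteq> d" "b \<noteq> c" "b \<noteq> d" "c \<noteq> d"
    and e: "adj a b" "adj b c" "adj c d" "adj d a" and ne: "\<not> adj a c" "\<not> adj b d"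
  shows "hole V E {a,b,c,d}"
proof -
  let ?C = "{a,b,c,d}"
  have e': "adj b a" "adj c b" "adj d c" "adj a d" using e adj_sym by auto
  have ne': "\<not> adj c a" "\<not> adj d b" using ne adj_sym by auto
  have card: "card ?C = 4" using dist by auto
  have cc: "conn ?C"
  proof -
    have "conn {a,b}" using conn_pair[OF e(1)] .
    moreover have "adjS {a,b} {c}" using e(2) unfolding adjS_def by blast
    ultimately have "conn ({a,b} \<union> {c})" using conn_union conn_single by blast
    moreover have "adjS ({a,b} \<union> {c}) {d}" using e(3) unfolding adjS_def by blast
    ultimately have "conn ({a,b} \<union> {c} \<union> {d})" using conn_union conn_single by blast
    moreover have "{a,b} \<union> {c} \<union> {d} = ?C" by auto
    ultimately show ?thesis by simp
  qed
  have nb: "{u. {u, x} \<in> induced_edges E ?C} = {u\<in>?C. adj u x}" if "x \<in> ?C" for x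
    using that unfolding induced_edges_def adj_def by auto
  have da: "{u\<in>?C. adj u a} = {b,d}" using e e' ne ne' by auto
  have db: "{u\<in>?C. adj u b} = {a,c}" using e e' ne ne' by auto
  have dc: "{u\<in>?C. adj u c} = {b,d}" using e e' ne ne' by auto
  have dd: "{u\<in>?C. adj u d} = {a,c}" using e e' ne ne' by auto
  have deg: "degree (induced_edges E ?C) x = 2" if "x \<in> ?C" for x
  proof -
    have "degree (induced_edges E ?C) x = card {u\<in>?C. adj u x}" unfolding degree_def using nb[OF that] by simp
    then show ?thesis using that da db dc dd dist by auto
  qed
  show ?thesis unfolding hole_def cycle_graph_def
    using V card cc deg unfolding conn_def by auto
qed

end

context G begin

lemma F2_edge:
  assumes noK4: "\<not> induced_minor K4_V K4_E V E" and noK23: "\<not> induced_minor K23_V K23_E V E"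
    and noF2: "\<not> induced_minor F2_V F2_E V E"
    and H1: "hole V E C1" and H2: "hole V E C2" and dj: "C1 \<inter> C2 = {}"
    and uC1: "u \<in> C1" and wC2: "w \<in> C2" and uw: "adj u w"
    and only: "\<forall>x\<in>C1. \<forall>y\<in>C2. adj x y \<longrightarrow> x = u \<or> y = w"
  shows False
proof -
  have C1V: "C1 \<subseteq> V" and c41: "card C1 \<ge> 4" using hole_basic[OF H1] by auto
  have C2V: "C2 \<subseteq> V" and c42: "card C2 \<ge> 4" using hole_basic[OF H2] by auto
  have cC1: "conn C1" using hole_conn[OF H1] .
  have cC2: "conn C2" using hole_conn[OF H2] .
  have dj': "C2 \<inter> C1 = {}" using dj by blast
  obtain A where iA: "ipath A" and sA: "set A = C1 - {u}" and lA: "length A + 1 = card C1"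
    and aA: "\<forall>k<length A. adj u (A!k) \<longleftrightarrow> k = 0 \<or> k = length A - 1"
    using hole_path[OF H1 uC1] by blast
  obtain B where iB: "ipath B" and sB: "set B = C2 - {w}" and lB: "length B + 1 = card C2"
    and aB: "\<forall>k<length B. adj w (B!k) \<longleftrightarrow> k = 0 \<or> k = length B - 1"
    using hole_path[OF H2 wC2] by blast
  have uC2: "adjS {u} C2" using uw wC2 adjS_singleI by blast
  have wC1: "adjS {w} C1" using uw uC1 adjS_singleI adj_sym[of u w] by simp
  show False
  proof (rule F2_paths[OF noF2, of "{u,w}" A B])
    show "{u,w} \<subseteq> V" using uC1 wC2 C1V C2V by auto
    show "conn {u,w}" using conn_pair[OF uw] .
    show "ipath A" "ipath B" using iA iB .
    show "length A \<ge> 3" "length B \<ge> 3" using lA lB c41 c42 by auto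
    show "set A \<subseteq> V" "set B \<subseteq> V" using sA sB C1V C2V by auto
    show "{u,w} \<inter> set A = {}" "{u,w} \<inter> set B = {}" "set A \<inter> set B = {}"
      using sA sB dj uC1 wC2 by auto
    show "\<forall>k<length A. adjS {A!k} {u,w} \<longleftrightarrow> (k = 0 \<or> k = length A - 1)"
    proof (intro allI impI)
      fix k assume k: "k < length A"
      let ?a = "A!k"
      have aC1: "?a \<in> C1" "?a \<noteq> u" using nth_mem[OF k] sA by auto
      have "adjS {?a} {u,w} = (adj u ?a \<or> adj ?a w)" using adj_sym[of ?a u] by (simp add: adjS_s2)
      also have "\<dots> = adj u ?a"
      proof
        assume "adj u ?a \<or> adj ?a w"
        then show "adj u ?a"
        proof
          assume "adj ?a w"
          then have "adjS {?a} C2" using wC2 adjS_singleI by blast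
          then show "adj u ?a" using L2[OF noK4 noK23 H1 C2V dj' cC2 uC1 aC1(1) aC1(2)[symmetric] uC2] by simp
        qed
      qed simp
      also have "\<dots> = (k = 0 \<or> k = length A - 1)" using aA k by blast
      finally show "adjS {?a} {u,w} = (k = 0 \<or> k = length A - 1)" .
    qed
    show "\<forall>k<length B. adjS {B!k} {u,w} \<longleftrightarrow> (k = 0 \<or> k = length B - 1)"
    proof (intro allI impI)
      fix k assume k: "k < length B"
      let ?b = "B!k"
      have bC2: "?b \<in> C2" "?b \<noteq> w" using nth_mem[OF k] sB by auto
      have "adjS {?b} {u,w} = (adj ?b u \<or> adj w ?b)" using adj_sym[of ?b w] by (simp add: adjS_s2)
      also have "\<dots> = adj w ?b"
      proof
        assume "adj ?b u \<or> adj w ?b"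
        then show "adj w ?b"
        proof
          assume "adj ?b u"
          then have "adjS {?b} C1" using uC1 adjS_singleI by blast
          then show "adj w ?b" using L2[OF noK4 noK23 H2 C1V dj cC1 wC2 bC2(1) bC2(2)[symmetric] wC1] by simp
        qed
      qed simp
      also have "\<dots> = (k = 0 \<or> k = length B - 1)" using aB k by blast
      finally show "adjS {?b} {u,w} = (k = 0 \<or> k = length B - 1)" .
    qed
    show "\<not> adjS (set A) (set B)"
    proof
      assume "adjS (set A) (set B)"
      then obtain x y where "x \<in> set A" "y \<in> set B" "adj x y" unfolding adjS_def by blast
      then show False using only sA sB by blast
    qed
  qed
qed

end

context G begin

lemma caseB_edge:
  assumes noK4: "\<not> induced_minor K4_V K4_E V E" and noK23: "\<not> induced_minor K23_V K23_E V E"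
    and noF1: "\<not> induced_minor F1_V F1_E V E" and noF2: "\<not> induced_minor F2_V F2_E V E"
    and H1: "hole V E C1" and H2: "hole V E C2" and dj: "C1 \<inter> C2 = {}"
    and uC1: "u \<in> C1" and wC2: "w \<in> C2" and uw: "adj u w"
  shows False
proof (cases "\<forall>x\<in>C1. \<forall>y\<in>C2. adj x y \<longrightarrow> x = u \<or> y = w")
  case True
  then show False using F2_edge[OF noK4 noK23 noF2 H1 H2 dj uC1 wC2 uw] by blast
next
  case False
  then obtain x y where xC1: "x \<in> C1" and yC2: "y \<in> C2" and xy: "adj x y" and xu: "x \<noteq> u" and yw: "y \<noteq> w"
    by blast
  have C1V: "C1 \<subseteq> V" using hole_basic[OF H1] by auto
  have C2V: "C2 \<subseteq> V" using hole_basic[OF H2] by auto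
  have cC1: "conn C1" using hole_conn[OF H1] .
  have cC2: "conn C2" using hole_conn[OF H2] .
  have dj': "C2 \<inter> C1 = {}" using dj by blast
  have aX: "adjS {a} C2" if "a \<in> C1" "b \<in> C2" "adj a b" for a b using that adjS_singleI by blast
  have aY: "adjS {b} C1" if "a \<in> C1" "b \<in> C2" "adj a b" for a b using that adjS_singleI adj_sym[of a b] by auto
  have ux: "adj u x" using L2[OF noK4 noK23 H1 C2V dj' cC2 uC1 xC1 xu[symmetric] aX[OF uC1 wC2 uw] aX[OF xC1 yC2 xy]] .
  have wy: "adj w y" using L2[OF noK4 noK23 H2 C1V dj cC1 wC2 yC2 yw[symmetric] aY[OF uC1 wC2 uw] aY[OF xC1 yC2 xy]] .
  have onlyX: "z = u \<or> z = x" if "z \<in> C1" "adjS {z} C2" for z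
    using L3[OF noK4 H1 C2V dj' cC2 uC1 xC1 that(1) xu[symmetric] _ _ aX[OF uC1 wC2 uw] aX[OF xC1 yC2 xy] that(2)]
    by blast
  have onlyY: "z = w \<or> z = y" if "z \<in> C2" "adjS {z} C1" for z
    using L3[OF noK4 H2 C1V dj cC1 wC2 yC2 that(1) yw[symmetric] _ _ aY[OF uC1 wC2 uw] aY[OF xC1 yC2 xy] that(2)]
    by blast
  have uy_ne: "u \<noteq> y" "x \<noteq> w" "u \<noteq> w" "x \<noteq> y" using uC1 xC1 wC2 yC2 dj by auto
  show False
  proof (cases "adj u y")
    case uy: True
    show False
    proof (cases "adj x w")
      case xw: True
      have "induced_minor K4_V K4_E V E"
      proof (rule K4_gen[of "{u}" "{x}" "{w}" "{y}"])
        show "{u} \<noteq> {}" "{x} \<noteq> {}" "{w} \<noteq> {}" "{y} \<noteq> {}" by auto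
        show "{u} \<subseteq> V" "{x} \<subseteq> V" "{w} \<subseteq> V" "{y} \<subseteq> V" using uC1 xC1 wC2 yC2 C1V C2V by auto
        show "conn {u}" "conn {x}" "conn {w}" "conn {y}" using conn_single by auto
        show "{u} \<inter> {x} = {}" "{u} \<inter> {w} = {}" "{u} \<inter> {y} = {}" "{x} \<inter> {w} = {}"
          "{x} \<inter> {y} = {}" "{w} \<inter> {y} = {}" using uy_ne xu yw by auto
        show "adjS {u} {x}" "adjS {u} {w}" "adjS {u} {y}" "adjS {x} {w}" "adjS {x} {y}" "adjS {w} {y}"
          using ux uw uy xw xy wy by (simp_all add: adjS_ss)
      qed
      then show False using noK4 by simp
    next
      case xw: False
      have "\<forall>x'\<in>C1. \<forall>y'\<in>C2. adj x' y' \<longrightarrow> x' = u \<or> y' = y"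
      proof (intro ballI impI)
        fix x' y' assume x': "x' \<in> C1" and y': "y' \<in> C2" and a: "adj x' y'"
        show "x' = u \<or> y' = y"
        proof (rule ccontr)
          assume "\<not> (x' = u \<or> y' = y)"
          then have "x' = x" "y' = w" using onlyX[OF x' aX[OF x' y' a]] onlyY[OF y' aY[OF x' y' a]] by auto
          then show False using a xw by simp
        qed
      qed
      then show False using F2_edge[OF noK4 noK23 noF2 H1 H2 dj uC1 yC2 uy] by blast
    qed
  next
    case uy: False
    show False
    proof (cases "adj x w")
      case xw: True
      have "\<forall>x'\<in>C1. \<forall>y'\<in>C2. adj x' y' \<longrightarrow> x' = x \<or> y' = w"
      proof (intro ballI impI)
        fix x' y' assume x': "x' \<in> C1" and y': "y' \<in> C2" and a: "adj x' y'"
        show "x' = x \<or> y' = w"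
        proof (rule ccontr)
          assume "\<not> (x' = x \<or> y' = w)"
          then have "x' = u" "y' = y" using onlyX[OF x' aX[OF x' y' a]] onlyY[OF y' aY[OF x' y' a]] by auto
          then show False using a uy by simp
        qed
      qed
      then show False using F2_edge[OF noK4 noK23 noF2 H1 H2 dj xC1 wC2 xw] by blast
    next
      case xw: False
      have wu: "adj w u" using uw adj_sym by simp
      have H3: "hole V E {u,x,y,w}"
        by (rule hole4) (use uC1 xC1 yC2 wC2 C1V C2V uy_ne xu yw ux xy wy wu uy xw adj_sym[of w y] in auto)
      show False
      proof (rule caseA[OF noK4 noK23 noF1 noF2 H1 H3])
        show "C1 \<inter> {u,x,y,w} \<noteq> {}" using uC1 by blast
        show "\<not> {u,x,y,w} \<subseteq> C1" using wC2 dj by blast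
      qed
    qed
  qed
qed

lemma adjS_Z3: "adjS {a} ({u} \<union> Q \<union> {w}) \<longleftrightarrow> adj a u \<or> adjS {a} Q \<or> adj a w"
  unfolding adjS_def by blast

lemma caseB_noedge:
  assumes noK4: "\<not> induced_minor K4_V K4_E V E" and noK23: "\<not> induced_minor K23_V K23_E V E"
    and noF2: "\<not> induced_minor F2_V F2_E V E" and cG: "connected_graph V E"
    and H1: "hole V E C1" and H2: "hole V E C2" and dj: "C1 \<inter> C2 = {}"
    and noedge: "\<forall>x\<in>C1. \<forall>y\<in>C2. \<not> adj x y"
  shows False
proof -
  have C1V: "C1 \<subseteq> V" and c41: "card C1 \<ge> 4" using hole_basic[OF H1] by auto
  have C2V: "C2 \<subseteq> V" and c42: "card C2 \<ge> 4" using hole_basic[OF H2] by auto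
  have ne1: "C1 \<noteq> {}" and ne2: "C2 \<noteq> {}" using c41 c42 by auto
  obtain Q u w where Q: "Q \<subseteq> V - C1 - C2" and cQ: "conn Q" and uC1: "u \<in> C1" and wC2: "w \<in> C2"
    and uQ: "adjS {u} Q" and wQ: "adjS {w} Q"
    using exQ[OF cG C1V C2V ne1 ne2 dj noedge] by blast
  have QV: "Q \<subseteq> V" and QC1: "Q \<inter> C1 = {}" and QC2: "Q \<inter> C2 = {}" using Q by auto
  define Z where "Z = {u} \<union> Q \<union> {w}"
  have cZ: "conn Z"
  proof -
    have "conn ({u} \<union> Q)" using conn_union[OF conn_single cQ uQ] .
    moreover have "adjS ({u} \<union> Q) {w}" using adjS_mono[OF adjS_symI[OF wQ], of "{u} \<union> Q" "{w}"] by blast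
    ultimately show ?thesis unfolding Z_def using conn_union conn_single by blast
  qed
  obtain A where iA: "ipath A" and sA: "set A = C1 - {u}" and lA: "length A + 1 = card C1"
    and aA: "\<forall>k<length A. adj u (A!k) \<longleftrightarrow> k = 0 \<or> k = length A - 1"
    using hole_path[OF H1 uC1] by blast
  obtain B where iB: "ipath B" and sB: "set B = C2 - {w}" and lB: "length B + 1 = card C2"
    and aB: "\<forall>k<length B. adj w (B!k) \<longleftrightarrow> k = 0 \<or> k = length B - 1"
    using hole_path[OF H2 wC2] by blast
  show False
  proof (rule F2_paths[OF noF2, of Z A B])
    show "Z \<subseteq> V" unfolding Z_def using QV uC1 wC2 C1V C2V by auto
    show "conn Z" using cZ .
    show "ipath A" "ipath B" using iA iB .
    show "length A \<ge> 3" "length B \<ge> 3" using lA lB c41 c42 by auto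
    show "set A \<subseteq> V" "set B \<subseteq> V" using sA sB C1V C2V by auto
    show "Z \<inter> set A = {}" "Z \<inter> set B = {}" "set A \<inter> set B = {}"
      unfolding Z_def using sA sB dj QC1 QC2 uC1 wC2 by auto
    show "\<forall>k<length A. adjS {A!k} Z \<longleftrightarrow> (k = 0 \<or> k = length A - 1)"
    proof (intro allI impI)
      fix k assume k: "k < length A"
      let ?a = "A!k"
      have aC1: "?a \<in> C1" "?a \<noteq> u" using nth_mem[OF k] sA by auto
      have naw: "\<not> adj ?a w" using noedge aC1 wC2 by blast
      have "adjS {?a} Z = (adj u ?a \<or> adjS {?a} Q)" unfolding Z_def adjS_Z3 using naw adj_sym[of ?a u] by simp
      also have "\<dots> = adj u ?a"
      proof
        assume "adj u ?a \<or> adjS {?a} Q"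
        then show "adj u ?a"
        proof
          assume "adjS {?a} Q"
          then show "adj u ?a" using L2[OF noK4 noK23 H1 QV QC1 cQ uC1 aC1(1) aC1(2)[symmetric] uQ] by simp
        qed
      qed simp
      also have "\<dots> = (k = 0 \<or> k = length A - 1)" using aA k by blast
      finally show "adjS {?a} Z = (k = 0 \<or> k = length A - 1)" .
    qed
    show "\<forall>k<length B. adjS {B!k} Z \<longleftrightarrow> (k = 0 \<or> k = length B - 1)"
    proof (intro allI impI)
      fix k assume k: "k < length B"
      let ?b = "B!k"
      have bC2: "?b \<in> C2" "?b \<noteq> w" using nth_mem[OF k] sB by auto
      have nbu: "\<not> adj ?b u" using noedge bC2 uC1 adj_sym[of ?b u] by blast
      have "adjS {?b} Z = (adj w ?b \<or> adjS {?b} Q)" unfolding Z_def adjS_Z3 using nbu adj_sym[of ?b w] by auto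
      also have "\<dots> = adj w ?b"
      proof
        assume "adj w ?b \<or> adjS {?b} Q"
        then show "adj w ?b"
        proof
          assume "adjS {?b} Q"
          then show "adj w ?b" using L2[OF noK4 noK23 H2 QV QC2 cQ wC2 bC2(1) bC2(2)[symmetric] wQ] by simp
        qed
      qed simp
      also have "\<dots> = (k = 0 \<or> k = length B - 1)" using aB k by blast
      finally show "adjS {?b} Z = (k = 0 \<or> k = length B - 1)" .
    qed
    show "\<not> adjS (set A) (set B)"
    proof
      assume "adjS (set A) (set B)"
      then obtain x y where "x \<in> set A" "y \<in> set B" "adj x y" unfolding adjS_def by blast
      then show False using noedge sA sB by blast
    qed
  qed
qed

end

theorem lemma4p5:
  fixes V :: "'a set" and E :: "'a set set"
  assumes "graph V E"
    and "connected_graph V E"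
    and "\<not> induced_minor K4_V K4_E V E"
    and "\<not> induced_minor K23_V K23_E V E"
    and "\<not> induced_minor F1_V F1_E V E"
    and "\<not> induced_minor F2_V F2_E V E"
  shows "\<forall>C1 C2. hole V E C1 \<and> hole V E C2 \<longrightarrow> C1 = C2"
proof (intro allI impI, elim conjE)
  interpret G V E by unfold_locales (rule assms(1))
  fix C1 C2 assume H1: "hole V E C1" and H2: "hole V E C2"
  show "C1 = C2"
  proof (rule ccontr)
    assume ne: "C1 \<noteq> C2"
    show False
    proof (cases "C1 \<inter> C2 = {}")
      case True
      show False
      proof (cases "\<exists>u\<in>C1. \<exists>w\<in>C2. adj u w")
        case True
        then obtain u w where "u \<in> C1" "w \<in> C2" "adj u w" by blast
        then show False using caseB_edge[OF assms(3,4,5,6) H1 H2 \<open>C1 \<inter> C2 = {}\<close>] by blast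
      next
        case False
        then show False using caseB_noedge[OF assms(3,4,6,2) H1 H2 \<open>C1 \<inter> C2 = {}\<close>] by blast
      qed
    next
      case False
      show False
      proof (cases "C2 \<subseteq> C1")
        case True
        then have "\<not> C1 \<subseteq> C2" using ne by blast
        moreover have "C2 \<inter> C1 \<noteq> {}" using False by blast
        ultimately show False using caseA[OF assms(3,4,5,6) H2 H1] by blast
      next
        case nsub: False
        show False using caseA[OF assms(3,4,5,6) H1 H2 False nsub] .
      qed
    qed
  qed
qed


end
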